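(* Let $v>9$ be an integer with $v\equiv 1 \pmod 4$. If there exists an $\mathrm{STS}(v)$ admitting a zero-sum $k$-flow for some integer $k\ge 2$, then there exists an $\mathrm{STS}(2v+7)$ admitting a zero-sum $k$-flow.
   Context: A Steiner triple system $\mathrm{STS}(v)$ is a pair $(X,\mathcal{B})$ where $|X|=v$ and $\mathcal{B}$ is a collection of 3-subsets (blocks) of $X$ such that every 2-subset of $X$ lies in exactly one block. For a design $(X,\mathcal{B})$ and an integer $n\ge 2$, a zero-sum $n$-flow is a map $f:\mathcal{B}\to\{\pm1,\pm2,\ldots,\pm(n-1)\}$ such that for every point $x\in X$, $\sum_{B\in\mathcal{B},\,x\in B} f(B)=0$. *)

theory Defs
  imports Main
begin

definition is_STS :: "'a set \<Rightarrow> 'a set set \<Rightarrow> bool" where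
  "is_STS X B \<longleftrightarrow> finite X \<and>
     (\<forall>b\<in>B. b \<subseteq> X \<and> card b = 3) \<and>
     (\<forall>x\<in>X. \<forall>y\<in>X. x \<noteq> y \<longrightarrow> (\<exists>!b. b \<in> B \<and> {x, y} \<subseteq> b))"

definition STS :: "nat \<Rightarrow> 'a set \<Rightarrow> 'a set set \<Rightarrow> bool" where
  "STS v X B \<longleftrightarrow> is_STS X B \<and> card X = v"

definition zero_sum_flow :: "nat \<Rightarrow> 'a set \<Rightarrow> 'a set set \<Rightarrow> ('a set \<Rightarrow> int) \<Rightarrow> bool" where
  "zero_sum_flow n X B f \<longleftrightarrow> n \<ge> 2 \<and>
     (\<forall>b\<in>B. f b \<noteq> 0 \<and> \<bar>f b\<bar> \<le> int n - 1) \<and>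
     (\<forall>x\<in>X. (\<Sum>b\<in>{b\<in>B. x \<in> b}. f b) = 0)"

end

theory Submission
  imports Defs
begin

lemma transport:
  fixes X :: "'a set" and B :: "'a set set"
  assumes sts: "STS v X B" and fl: "zero_sum_flow k X B f"
  shows "\<exists>(B0::nat set set) f0. STS v {..<v} B0 \<and> zero_sum_flow k {..<v} B0 f0"
proof -
  from sts have finX: "finite X" and cX: "card X = v"
    and blk: "\<forall>b\<in>B. b \<subseteq> X \<and> card b = 3"
    and pr: "\<forall>x\<in>X. \<forall>y\<in>X. x \<noteq> y \<longrightarrow> (\<exists>!b. b \<in> B \<and> {x, y} \<subseteq> b)"
    unfolding STS_def is_STS_def by auto
  obtain \<beta> where bij: "bij_betw \<beta> X {..<v}"
    using ex_bij_betw_finite_nat[OF finX] cX atLeast0LessThan by auto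
  have inj: "inj_on \<beta> X" using bij by (rule bij_betw_imp_inj_on)
  have img: "\<beta> ` X = {..<v}" using bij by (rule bij_betw_imp_surj_on)
  define B0 where "B0 = (\<lambda>b. \<beta> ` b) ` B"
  define f0 where "f0 = (\<lambda>b'. f (inv_into X \<beta> ` b'))"
  have bk: "inv_into X \<beta> ` (\<beta> ` b) = b" if "b \<in> B" for b
  proof -
    have "b \<subseteq> X" using blk that by auto
    then show ?thesis using inj by (simp add: image_image inv_into_f_f subset_iff image_cong[of b b _ id] )
  qed
  have f0b: "f0 (\<beta> ` b) = f b" if "b \<in> B" for b using bk[OF that] f0_def by simp
  have injB: "inj_on (\<lambda>b. \<beta> ` b) B"
    by (metis (no_types, lifting) bk inj_onI)
  have mem: "\<beta> x \<in> \<beta> ` b \<longleftrightarrow> x \<in> b" if "b \<in> B" "x \<in> X" for b x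
  proof -
    have "b \<subseteq> X" using blk that by auto
    then show ?thesis using inj that by (auto simp: inj_on_def)
  qed
  have S1a: "\<forall>b'\<in>B0. b' \<subseteq> {..<v} \<and> card b' = 3"
  proof
    fix b' assume "b' \<in> B0"
    then obtain b where b: "b \<in> B" "b' = \<beta> ` b" unfolding B0_def by auto
    have "b \<subseteq> X" "card b = 3" using blk b by auto
    then show "b' \<subseteq> {..<v} \<and> card b' = 3"
      using b img inj by (auto simp: card_image inj_on_subset)
  qed
  have S1b: "\<forall>x\<in>{..<v}. \<forall>y\<in>{..<v}. x \<noteq> y \<longrightarrow> (\<exists>!b'. b' \<in> B0 \<and> {x, y} \<subseteq> b')"
  proof (intro ballI impI)
    fix x y assume x: "x \<in> {..<v}" and y: "y \<in> {..<v}" and xy: "x \<noteq> y"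
    obtain x0 where x0: "x0 \<in> X" "x = \<beta> x0" using x img by auto
    obtain y0 where y0: "y0 \<in> X" "y = \<beta> y0" using y img by auto
    have "x0 \<noteq> y0" using xy x0 y0 by auto
    then obtain b where b: "b \<in> B" "{x0,y0} \<subseteq> b" and un: "\<And>c. c \<in> B \<Longrightarrow> {x0,y0} \<subseteq> c \<Longrightarrow> c = b"
      using pr x0 y0 by metis
    show "\<exists>!b'. b' \<in> B0 \<and> {x, y} \<subseteq> b'"
    proof
      show "\<beta> ` b \<in> B0 \<and> {x, y} \<subseteq> \<beta> ` b" using b x0 y0 B0_def by auto
    next
      fix c' assume c': "c' \<in> B0 \<and> {x, y} \<subseteq> c'"
      then obtain c where c: "c \<in> B" "c' = \<beta> ` c" unfolding B0_def by auto
      have "{x0,y0} \<subseteq> c" using c c' mem x0 y0 by auto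
      then show "c' = \<beta> ` b" using un c by auto
    qed
  qed
  have S1: "STS v {..<v} B0"
    unfolding STS_def is_STS_def using S1a S1b by auto
  have S2a: "\<forall>b'\<in>B0. f0 b' \<noteq> 0 \<and> \<bar>f0 b'\<bar> \<le> int k - 1"
  proof
    fix b' assume "b' \<in> B0"
    then obtain b where b: "b \<in> B" "b' = \<beta> ` b" unfolding B0_def by auto
    have "f b \<noteq> 0 \<and> \<bar>f b\<bar> \<le> int k - 1" using fl b(1) unfolding zero_sum_flow_def by blast
    then show "f0 b' \<noteq> 0 \<and> \<bar>f0 b'\<bar> \<le> int k - 1" using f0b b by simp
  qed
  have S2b: "\<forall>x\<in>{..<v}. (\<Sum>b\<in>{b \<in> B0. x \<in> b}. f0 b) = 0"
  proof
    fix x assume x: "x \<in> {..<v}"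
    obtain x0 where x0: "x0 \<in> X" "x = \<beta> x0" using x img by auto
    have eq: "{b' \<in> B0. x \<in> b'} = (\<lambda>b. \<beta> ` b) ` {b \<in> B. x0 \<in> b}"
      using mem x0 unfolding B0_def by auto
    have "(\<Sum>b'\<in>{b' \<in> B0. x \<in> b'}. f0 b') = (\<Sum>b\<in>{b \<in> B. x0 \<in> b}. f0 (\<beta> ` b))"
    proof -
      have "inj_on (\<lambda>b. \<beta> ` b) {b \<in> B. x0 \<in> b}" by (rule inj_on_subset[OF injB]) auto
      then show ?thesis unfolding eq by (simp add: sum.reindex comp_def)
    qed
    also have "\<dots> = (\<Sum>b\<in>{b \<in> B. x0 \<in> b}. f b)" by (rule sum.cong) (auto simp: f0b)
    also have "\<dots> = 0" using fl x0 unfolding zero_sum_flow_def by blast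
    finally show "(\<Sum>b\<in>{b \<in> B0. x \<in> b}. f0 b) = 0" .
  qed
  have S2: "zero_sum_flow k {..<v} B0 f0"
    unfolding zero_sum_flow_def using S2a S2b fl zero_sum_flow_def by blast
  show ?thesis using S1 S2 by blast
qed

locale cons =
  fixes v :: nat
  assumes v13: "13 \<le> v" and v4: "v mod 4 = 1"
begin

definition md :: "int \<Rightarrow> nat" where "md z = nat (z mod int v)"
definition hh :: nat where "hh = (v - 1) div 2"

lemma vpos: "0 < int v" using v13 by simp
lemma hh2: "v = 2 * hh + 1" unfolding hh_def using v4 by presburger
lemma hh_even: "even hh" unfolding hh_def using v4 by presburger
lemma hh6: "6 \<le> hh" using hh2 v13 by linarith
lemma v_odd: "odd v" using hh2 by presburger

lemma int_md: "int (md z) = z mod int v" unfolding md_def using vpos by simp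
lemma md_lt: "md z < v"
proof -
  have "z mod int v < int v" using vpos by simp
  then show ?thesis unfolding md_def using vpos by (simp add: nat_less_iff)
qed
lemma md_nat: "n < v \<Longrightarrow> md (int n) = n" unfolding md_def by (simp add: nat_mod_distrib)
lemma md_eq: "md z = md w \<longleftrightarrow> z mod int v = w mod int v"
  by (metis int_md of_nat_eq_iff)
lemma md_eq_dvd: "md z = md w \<longleftrightarrow> int v dvd (z - w)"
  unfolding md_eq by (simp add: mod_eq_dvd_iff)
lemma md_md: "md (int (md z) + w) = md (z + w)"
  unfolding md_eq int_md by (simp add: mod_simps)
lemma md_md2: "md (w + int (md z)) = md (w + z)"
  unfolding md_eq int_md by (simp add: mod_simps)
lemma md_md3: "md (int (md z) - w) = md (z - w)"
  unfolding md_eq int_md by (simp add: mod_simps)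
lemma md_md4: "md (w - int (md z)) = md (w - z)"
  unfolding md_eq int_md by (simp add: mod_simps)
lemma md_range: "0 \<le> z \<Longrightarrow> z < int v \<Longrightarrow> md z = nat z"
  unfolding md_def by simp
lemma md_neg: "- int v \<le> z \<Longrightarrow> z < 0 \<Longrightarrow> md z = nat (z + int v)"
proof -
  assume a: "- int v \<le> z" "z < 0"
  have "z mod int v = (z + int v) mod int v" by simp
  also have "\<dots> = z + int v" using a by (intro mod_pos_pos_trivial) auto
  finally show ?thesis unfolding md_def by simp
qed
lemma md_big: "int v \<le> z \<Longrightarrow> z < 2 * int v \<Longrightarrow> md z = nat (z - int v)"
proof -
  assume a: "int v \<le> z" "z < 2 * int v"
  have "z mod int v = (z - int v) mod int v" by (simp add: mod_diff_right_eq[symmetric])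
  also have "\<dots> = z - int v" using a by (intro mod_pos_pos_trivial) auto
  finally show ?thesis unfolding md_def by simp
qed

definition blkM :: "nat \<Rightarrow> nat \<Rightarrow> nat set" where
  "blkM j t = {j, v + md (int j - int t), v + md (int j + int t)}"
definition blkS :: "nat \<Rightarrow> nat \<Rightarrow> nat set" where
  "blkS j e = {j, v + md (int j + int e - 3), 2*v + e}"
definition blkT :: "nat \<Rightarrow> nat set" where
  "blkT i = {v + i, v + md (int i + 2), v + md (int i + 6)}"
definition blkF :: "nat \<Rightarrow> nat set" where
  "blkF e = {2*v + e, 2*v + (e+1) mod 7, 2*v + (e+3) mod 7}"

definition thXY :: "nat \<Rightarrow> nat \<Rightarrow> nat" where
  "thXY j a = (if md (int a - int j + 3) < 7 then 2*v + md (int a - int j + 3)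
               else v + md (2 * int j - int a))"
definition thYY :: "nat \<Rightarrow> nat \<Rightarrow> nat" where
  "thYY a b = (let d = md (int b - int a) in
     if d = 2 then v + md (int a + 6) else if d = v - 2 then v + md (int a + 4)
     else if d = 4 then v + md (int a - 2) else if d = v - 4 then v + md (int a - 6)
     else if d = 6 then v + md (int a + 2) else if d = v - 6 then v + md (int a - 4)
     else md ((int a + int b) * int (hh + 1)))"
definition dF :: "nat \<Rightarrow> nat" where
  "dF d = (if d = 1 then 3 else if d = 2 then 6 else if d = 3 then 1 else if d = 4 then 5
           else if d = 5 then 4 else 2)"
definition thF :: "nat \<Rightarrow> nat \<Rightarrow> nat" where
  "thF a b = (a + dF ((b + 7 - a) mod 7)) mod 7"

definition third :: "nat \<Rightarrow> nat \<Rightarrow> nat" where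
  "third x y =
    (if x < v \<and> v \<le> y \<and> y < 2*v then thXY x (y - v)
     else if y < v \<and> v \<le> x \<and> x < 2*v then thXY y (x - v)
     else if x < v \<and> 2*v \<le> y then v + md (int x + int (y - 2*v) - 3)
     else if y < v \<and> 2*v \<le> x then v + md (int y + int (x - 2*v) - 3)
     else if v \<le> x \<and> x < 2*v \<and> v \<le> y \<and> y < 2*v then thYY (x - v) (y - v)
     else if v \<le> x \<and> x < 2*v \<and> 2*v \<le> y then md (int (x - v) + 3 - int (y - 2*v))
     else if v \<le> y \<and> y < 2*v \<and> 2*v \<le> x then md (int (y - v) + 3 - int (x - 2*v))
     else if 2*v \<le> x \<and> 2*v \<le> y then 2*v + thF (x - 2*v) (y - 2*v)
     else 0)"

lemma tri:
  assumes "third a b = c" "third b a = c" "third a c = b" "third c a = b"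
    "third b c = a" "third c b = a"
  shows "\<forall>x\<in>{a,b,c}. \<forall>y\<in>{a,b,c}. x \<noteq> y \<longrightarrow> {a,b,c} = {x,y,third x y}"
  using assms by auto

lemma mdc: "int v dvd (z - w) \<Longrightarrow> md z = md w" using md_eq_dvd by blast
lemmas mdsimps = int_md minus_div_mult_eq_mod[symmetric] algebra_simps

lemma thS:
  assumes j: "j < v" and e: "e < 7"
  shows "third j (v + md (int j + int e - 3)) = 2*v + e"
    "third (v + md (int j + int e - 3)) j = 2*v + e"
    "third j (2*v+e) = v + md (int j + int e - 3)"
    "third (2*v+e) j = v + md (int j + int e - 3)"
    "third (v + md (int j + int e - 3)) (2*v+e) = j"
    "third (2*v+e) (v + md (int j + int e - 3)) = j"
proof -
  have a: "md (int (md (int j + int e - 3)) - int j + 3) = e"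
  proof -
    have "md (int (md (int j + int e - 3)) - int j + 3) = md (int e)"
      by (rule mdc) (simp add: mdsimps)
    then show ?thesis using e v13 md_nat by simp
  qed
  have b: "md (int (md (int j + int e - 3)) + 3 - int e) = j"
  proof -
    have "md (int (md (int j + int e - 3)) + 3 - int e) = md (int j)"
      by (rule mdc) (simp add: mdsimps)
    then show ?thesis using j md_nat by simp
  qed
  have l: "md z < v" for z by (rule md_lt)
  show "third j (v + md (int j + int e - 3)) = 2*v + e"
    "third (v + md (int j + int e - 3)) j = 2*v + e"
    using j e a l[of "int j + int e - 3"] unfolding third_def thXY_def by auto
  show "third j (2*v+e) = v + md (int j + int e - 3)"
    "third (2*v+e) j = v + md (int j + int e - 3)"
    using j e unfolding third_def by auto
  show "third (v + md (int j + int e - 3)) (2*v+e) = j"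
    "third (2*v+e) (v + md (int j + int e - 3)) = j"
    using j e b l[of "int j + int e - 3"] unfolding third_def by auto
qed

lemma md_mult_cong: "md a = md b \<Longrightarrow> md (a * c) = md (b * c)"
  unfolding md_eq by (metis mod_mult_left_eq)

lemma ivh: "int v = 2 * int hh + 1" using hh2 by simp

lemma thM:
  assumes j: "j < v" and t4: "4 \<le> t" and th: "t \<le> hh"
  shows "third j (v + md (int j - int t)) = v + md (int j + int t)"
    "third (v + md (int j - int t)) j = v + md (int j + int t)"
    "third j (v + md (int j + int t)) = v + md (int j - int t)"
    "third (v + md (int j + int t)) j = v + md (int j - int t)"
    "third (v + md (int j - int t)) (v + md (int j + int t)) = j"
    "third (v + md (int j + int t)) (v + md (int j - int t)) = j"
proof -
  define A where "A = md (int j - int t)"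
  define C where "C = md (int j + int t)"
  have l: "md z < v" for z by (rule md_lt)
  have vv: "v = 2*hh+1" by (rule hh2)
  have e1: "md (int A - int j + 3) = v + 3 - t"
  proof -
    have "md (int A - int j + 3) = md (3 - int t)"
      unfolding A_def by (rule mdc) (simp add: mdsimps)
    also have "\<dots> = nat (3 - int t + int v)" using t4 th vv hh6 by (intro md_neg) auto
    also have "\<dots> = v + 3 - t" using th vv by simp
    finally show ?thesis .
  qed
  have e2: "md (2 * int j - int A) = C"
    unfolding A_def C_def by (rule mdc) (simp add: mdsimps)
  have e3: "md (int C - int j + 3) = t + 3"
  proof -
    have "md (int C - int j + 3) = md (int (t + 3))"
      unfolding C_def by (rule mdc) (simp add: mdsimps)
    also have "\<dots> = t + 3" using th vv hh6 by (intro md_nat) auto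
    finally show ?thesis .
  qed
  have e4: "md (2 * int j - int C) = A"
    unfolding A_def C_def by (rule mdc) (simp add: mdsimps)
  have e5: "md (int C - int A) = 2 * t"
  proof -
    have "md (int C - int A) = md (int (2 * t))"
      unfolding A_def C_def by (rule mdc) (simp add: mdsimps)
    also have "\<dots> = 2 * t" using th vv hh6 by (intro md_nat) auto
    finally show ?thesis .
  qed
  have e6: "md (int A - int C) = v - 2 * t"
  proof -
    have "md (int A - int C) = md (- int (2 * t))"
      unfolding A_def C_def by (rule mdc) (simp add: mdsimps)
    also have "\<dots> = nat (- int (2 * t) + int v)" using t4 th vv hh6 by (intro md_neg) auto
    also have "\<dots> = v - 2 * t" using th vv by simp
    finally show ?thesis .
  qed
  have e7: "md ((int A + int C) * int (hh + 1)) = j"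
  proof -
    have s: "md (int A + int C) = md (2 * int j)"
      unfolding A_def C_def by (rule mdc) (simp add: mdsimps)
    have "md ((int A + int C) * int (hh + 1)) = md (2 * int j * int (hh + 1))"
      using s by (rule md_mult_cong)
    also have "\<dots> = md (int j)"
    proof (rule mdc)
      have "2 * int j * int (hh + 1) - int j = int j * int v" by (simp add: ivh algebra_simps)
      then show "int v dvd (2 * int j * int (hh + 1) - int j)" by simp
    qed
    finally show ?thesis using j md_nat by simp
  qed
  have e8: "md ((int C + int A) * int (hh + 1)) = j" using e7 by (simp add: add.commute)
  show "third j (v + A) = v + C" "third (v + A) j = v + C"
    using j e1 e2 l[of "int j - int t"] th vv hh6 unfolding third_def thXY_def A_def[symmetric] by auto
  show "third j (v + C) = v + A" "third (v + C) j = v + A"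
    using j e3 e4 l[of "int j + int t"] th vv t4 hh6 unfolding third_def thXY_def C_def[symmetric] by auto
  have par2: "v - 2*t \<noteq> 6" "v - 2*t \<noteq> 4" "v - 2*t \<noteq> 2" using vv t4 by presburger+
  have par: "2*t \<noteq> v - 6" "2*t \<noteq> v - 4" "2*t \<noteq> v - 2" using vv t4 by presburger+
  show "third (v + A) (v + C) = j"
    using j e5 e7 l[of "int j + int t"] l[of "int j - int t"] th vv t4 hh6 par
    unfolding third_def thYY_def C_def[symmetric] A_def[symmetric] Let_def by auto
  show "third (v + C) (v + A) = j"
    using j e6 e8 l[of "int j + int t"] l[of "int j - int t"] th vv t4 hh6 par2
    unfolding third_def thYY_def C_def[symmetric] A_def[symmetric] Let_def by auto
qed

lemma thT:
  assumes i: "i < v"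
  shows "third (v + i) (v + md (int i + 2)) = v + md (int i + 6)"
    "third (v + md (int i + 2)) (v + i) = v + md (int i + 6)"
    "third (v + i) (v + md (int i + 6)) = v + md (int i + 2)"
    "third (v + md (int i + 6)) (v + i) = v + md (int i + 2)"
    "third (v + md (int i + 2)) (v + md (int i + 6)) = v + i"
    "third (v + md (int i + 6)) (v + md (int i + 2)) = v + i"
proof -
  define A where "A = md (int i + 2)"
  define C where "C = md (int i + 6)"
  have l: "md z < v" for z by (rule md_lt)
  have vv: "v = 2*hh+1" by (rule hh2)
  have d1: "md (int A - int i) = 2"
  proof -
    have "md (int A - int i) = md (int 2)" unfolding A_def by (rule mdc) (simp add: mdsimps)
    then show ?thesis using v13 md_nat[of 2] by simp
  qed
  have d2: "md (int i - int A) = v - 2"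
  proof -
    have "md (int i - int A) = md (-2)" unfolding A_def by (rule mdc) (simp add: mdsimps)
    also have "\<dots> = nat (-2 + int v)" using v13 by (intro md_neg) auto
    finally show ?thesis by simp
  qed
  have d3: "md (int C - int i) = 6"
  proof -
    have "md (int C - int i) = md (int 6)" unfolding C_def by (rule mdc) (simp add: mdsimps)
    then show ?thesis using v13 md_nat[of 6] by simp
  qed
  have d4: "md (int i - int C) = v - 6"
  proof -
    have "md (int i - int C) = md (-6)" unfolding C_def by (rule mdc) (simp add: mdsimps)
    also have "\<dots> = nat (-6 + int v)" using v13 by (intro md_neg) auto
    finally show ?thesis by simp
  qed
  have d5: "md (int C - int A) = 4"
  proof -
    have "md (int C - int A) = md (int 4)" unfolding A_def C_def by (rule mdc) (simp add: mdsimps)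
    then show ?thesis using v13 md_nat[of 4] by simp
  qed
  have d6: "md (int A - int C) = v - 4"
  proof -
    have "md (int A - int C) = md (-4)" unfolding A_def C_def by (rule mdc) (simp add: mdsimps)
    also have "\<dots> = nat (-4 + int v)" using v13 by (intro md_neg) auto
    finally show ?thesis by simp
  qed
  have r1: "md (int A + 4) = C" unfolding A_def C_def by (rule mdc) (simp add: mdsimps)
  have r2: "md (int C - 4) = A" unfolding A_def C_def by (rule mdc) (simp add: mdsimps)
  have r3: "md (int A - 2) = i"
  proof -
    have "md (int A - 2) = md (int i)" unfolding A_def by (rule mdc) (simp add: mdsimps)
    then show ?thesis using i md_nat by simp
  qed
  have r4: "md (int C - 6) = i"
  proof -
    have "md (int C - 6) = md (int i)" unfolding C_def by (rule mdc) (simp add: mdsimps)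
    then show ?thesis using i md_nat by simp
  qed
  have neqs: "2 \<noteq> v - 2" "2 \<noteq> v - 4" "2 \<noteq> v - 6" "v - 2 \<noteq> 2" "v - 2 \<noteq> 4" "v - 2 \<noteq> v - 4" "v - 2 \<noteq> 6" "v - 2 \<noteq> v - 6" "4 \<noteq> v - 2" "4 \<noteq> v - 4" "4 \<noteq> v - 6" "v - 4 \<noteq> 2" "v - 4 \<noteq> v - 2" "v - 4 \<noteq> 4" "v - 4 \<noteq> 6" "v - 4 \<noteq> v - 6" "6 \<noteq> v - 2" "6 \<noteq> v - 4" "6 \<noteq> v - 6" "v - 6 \<noteq> 2" "v - 6 \<noteq> v - 2" "v - 6 \<noteq> 4" "v - 6 \<noteq> v - 4" "v - 6 \<noteq> 6" using v13 by auto
  have lA: "A < v" "C < v" unfolding A_def C_def by (rule md_lt)+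
  note U = third_def thYY_def Let_def
  show "third (v + i) (v + A) = v + C" using i lA d1 unfolding U by (simp add: C_def)
  show "third (v + A) (v + i) = v + C" using i lA d2 r1 neqs unfolding U by simp
  show "third (v + i) (v + C) = v + A" using i lA d3 neqs unfolding U by (simp add: A_def)
  show "third (v + C) (v + i) = v + A" using i lA d4 r2 neqs unfolding U by simp
  show "third (v + A) (v + C) = v + i" using i lA d5 r3 neqs unfolding U by simp
  show "third (v + C) (v + A) = v + i" using i lA d6 r4 neqs unfolding U by simp
qed

lemma thF_all:
  assumes "l < (7::nat)"
  shows "thF l ((l+1) mod 7) = (l+3) mod 7 \<and> thF ((l+1) mod 7) l = (l+3) mod 7 \<and>
         thF l ((l+3) mod 7) = (l+1) mod 7 \<and> thF ((l+3) mod 7) l = (l+1) mod 7 \<and>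
         thF ((l+1) mod 7) ((l+3) mod 7) = l \<and> thF ((l+3) mod 7) ((l+1) mod 7) = l"
proof -
  have "l = 0 \<or> l = 1 \<or> l = 2 \<or> l = 3 \<or> l = 4 \<or> l = 5 \<or> l = 6" using assms by presburger
  then show ?thesis by (elim disjE) (simp_all add: thF_def dF_def)
qed

lemma thFano:
  assumes l: "l < 7"
  shows "third (2*v + l) (2*v + (l+1) mod 7) = 2*v + (l+3) mod 7"
    "third (2*v + (l+1) mod 7) (2*v + l) = 2*v + (l+3) mod 7"
    "third (2*v + l) (2*v + (l+3) mod 7) = 2*v + (l+1) mod 7"
    "third (2*v + (l+3) mod 7) (2*v + l) = 2*v + (l+1) mod 7"
    "third (2*v + (l+1) mod 7) (2*v + (l+3) mod 7) = 2*v + l"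
    "third (2*v + (l+3) mod 7) (2*v + (l+1) mod 7) = 2*v + l"
  using thF_all[OF l] v13 unfolding third_def by auto

definition PM :: "(nat \<times> nat) set" where "PM = {..<v} \<times> {4..hh}"
definition PS :: "(nat \<times> nat) set" where "PS = {..<v} \<times> {..<7}"
definition BM :: "nat set set" where "BM = (\<lambda>(j,t). blkM j t) ` PM"
definition BS :: "nat set set" where "BS = (\<lambda>(j,e). blkS j e) ` PS"
definition BT :: "nat set set" where "BT = blkT ` {..<v}"
definition BF :: "nat set set" where "BF = blkF ` {..<7}"
definition BN :: "nat set set" where "BN = BM \<union> BS \<union> BT \<union> BF"

lemma inBM: "j < v \<Longrightarrow> 4 \<le> t \<Longrightarrow> t \<le> hh \<Longrightarrow> blkM j t \<in> BN"
  unfolding BN_def BM_def PM_def by force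
lemma inBS: "j < v \<Longrightarrow> e < 7 \<Longrightarrow> blkS j e \<in> BN"
  unfolding BN_def BS_def PS_def by force
lemma inBT: "i < v \<Longrightarrow> blkT i \<in> BN"
  unfolding BN_def BT_def by force
lemma inBF: "l < 7 \<Longrightarrow> blkF l \<in> BN"
  unfolding BN_def BF_def by force

lemma exXS: "j < v \<Longrightarrow> e < 7 \<Longrightarrow> {j, 2*v+e, v + md (int j + int e - 3)} \<in> BN"
  using inBS[of j e] unfolding blkS_def by (simp add: insert_commute)

lemma exYS:
  assumes a: "a < v" and e: "e < 7"
  shows "{v + a, 2*v+e, md (int a + 3 - int e)} \<in> BN"
proof -
  define j where "j = md (int a + 3 - int e)"
  have j: "j < v" unfolding j_def by (rule md_lt)
  have "md (int j + int e - 3) = md (int a)" unfolding j_def by (rule mdc) (simp add: mdsimps)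
  then have "md (int j + int e - 3) = a" using a md_nat by simp
  then have "blkS j e = {v + a, 2*v+e, j}" unfolding blkS_def by auto
  then show ?thesis using inBS[OF j e] j_def by simp
qed

lemma exXY:
  assumes j: "j < v" and a: "a < v"
  shows "{j, v + a, thXY j a} \<in> BN"
proof (cases "md (int a - int j + 3) < 7")
  case True
  define e where "e = md (int a - int j + 3)"
  have "md (int j + int e - 3) = md (int a)" unfolding e_def by (rule mdc) (simp add: mdsimps)
  then have "md (int j + int e - 3) = a" using a md_nat by simp
  then have "blkS j e = {j, v + a, thXY j a}" using True unfolding blkS_def thXY_def e_def by auto
  then show ?thesis using inBS[OF j True] e_def by simp
next
  case False
  have vv: "v = 2*hh+1" by (rule hh2)
  define d where "d = md (int a - int j)"
  have dl: "d < v" unfolding d_def by (rule md_lt)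
  have ed: "md (int a - int j + 3) = md (int d + 3)" unfolding d_def by (rule mdc) (simp add: mdsimps)
  have d4: "4 \<le> d"
  proof (rule ccontr)
    assume "\<not> 4 \<le> d"
    then have "md (int d + 3) = nat (int d + 3)" using v13 by (intro md_range) auto
    then show False using False ed \<open>\<not> 4 \<le> d\<close> by simp
  qed
  have dv: "d + 4 \<le> v"
  proof (rule ccontr)
    assume "\<not> d + 4 \<le> v"
    then have "md (int d + 3) = nat (int d + 3 - int v)" using dl v13 by (intro md_big) auto
    then show False using False ed \<open>\<not> d + 4 \<le> v\<close> dl by simp
  qed
  have th: "thXY j a = v + md (2 * int j - int a)" using False unfolding thXY_def by simp
  show ?thesis
  proof (cases "d \<le> hh")
    case True
    have 1: "md (int j + int d) = a"
    proof -
      have "md (int j + int d) = md (int a)" unfolding d_def by (rule mdc) (simp add: mdsimps)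
      then show ?thesis using a md_nat by simp
    qed
    have 2: "md (int j - int d) = md (2 * int j - int a)" unfolding d_def by (rule mdc) (simp add: mdsimps)
    have "blkM j d = {j, v + a, thXY j a}" unfolding blkM_def th 1 2 by auto
    then show ?thesis using inBM[OF j d4 True] by simp
  next
    case False
    define t where "t = v - d"
    have t4: "4 \<le> t" "t \<le> hh" using dv False vv unfolding t_def by auto
    have ti: "int t = int v - int d" using dl unfolding t_def by simp
    have 1: "md (int j - int t) = a"
    proof -
      have "md (int j - int t) = md (int a)" unfolding ti d_def
        by (intro mdc) (simp add: mdsimps)
      then show ?thesis using a md_nat by simp
    qed
    have 2: "md (int j + int t) = md (2 * int j - int a)" unfolding ti d_def
      by (intro mdc) (simp add: mdsimps)
    have "blkM j t = {j, v + a, thXY j a}" unfolding blkM_def th 1 2 by auto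
    then show ?thesis using inBM[OF j t4] by simp
  qed
qed

lemma md_sub_eq: "md (int b - int a) = md z \<Longrightarrow> b < v \<Longrightarrow> md (int a + z) = b"
proof -
  assume 1: "md (int b - int a) = md z" and b: "b < v"
  then have "int v dvd (int b - int a - z)" using md_eq_dvd by blast
  moreover have "int a + z - int b = - (int b - int a - z)" by simp
  ultimately have "int v dvd (int a + z - int b)" by (simp only: dvd_minus_iff)
  then have "md (int a + z) = md (int b)" using md_eq_dvd by blast
  then show ?thesis using b md_nat by simp
qed

lemma md_num: "0 \<le> c \<Longrightarrow> c < int v \<Longrightarrow> md c = nat c" by (rule md_range)
lemma md_negnum: "0 < c \<Longrightarrow> c \<le> int v \<Longrightarrow> md (- c) = v - nat c"
  using md_neg[of "- c"] by simp

lemma exYY: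
  assumes a: "a < v" and b: "b < v" and ab: "a \<noteq> b"
  shows "{v + a, v + b, thYY a b} \<in> BN"
proof -
  define d where "d = md (int b - int a)"
  have vv: "v = 2*hh+1" by (rule hh2)
  have m2: "md 2 = 2" "md 4 = 4" "md 6 = 6" using md_num[of 2] md_num[of 4] md_num[of 6] v13 by auto
  have n2: "md (-2) = v - 2" "md (-4) = v - 4" "md (-6) = v - 6"
    using md_negnum[of 2] md_negnum[of 4] md_negnum[of 6] v13 by auto
  have bt: "blkT i = {v + i, v + md (int i + 2), v + md (int i + 6)}" for i unfolding blkT_def by simp
  show ?thesis
  proof (cases "d = 2")
    case True
    then have "md (int a + 2) = b" using md_sub_eq[of b a 2] b m2 d_def by simp
    then have "blkT a = {v + a, v + b, thYY a b}" using True unfolding bt thYY_def d_def by simp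
    then show ?thesis using inBT[OF a] by simp
  next
    case F2: False
    show ?thesis
    proof (cases "d = v - 2")
      case True
      then have e: "md (int a + (-2)) = b" using md_sub_eq[of b a "-2"] b n2 d_def by simp
      have "md (int b + 2) = md (int a)" unfolding e[symmetric] by (rule mdc) (simp add: mdsimps)
      then have 1: "md (int b + 2) = a" using a md_nat by simp
      have 2: "md (int b + 6) = md (int a + 4)" unfolding e[symmetric] by (rule mdc) (simp add: mdsimps)
      have "blkT b = {v + a, v + b, thYY a b}" using True F2 unfolding bt thYY_def d_def[symmetric] Let_def 1 2
        by auto
      then show ?thesis using inBT[OF b] by simp
    next
      case F3: False
      show ?thesis
      proof (cases "d = 4")
        case True
        then have e: "md (int a + 4) = b" using md_sub_eq[of b a 4] b m2 d_def by simp
        define i where "i = md (int a - 2)"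
        have "md (int i + 2) = md (int a)" unfolding i_def by (rule mdc) (simp add: mdsimps)
        then have 1: "md (int i + 2) = a" using a md_nat by simp
        have 2: "md (int i + 6) = b" unfolding i_def e[symmetric] by (rule mdc) (simp add: mdsimps)
        have "blkT i = {v + a, v + b, thYY a b}" using True F2 F3 v13 unfolding bt thYY_def d_def[symmetric] Let_def i_def[symmetric] 1 2
          by auto
        then show ?thesis using inBT[of i] md_lt i_def by simp
      next
        case F4: False
        show ?thesis
        proof (cases "d = v - 4")
          case True
          then have e: "md (int a + (-4)) = b" using md_sub_eq[of b a "-4"] b n2 d_def by simp
          define i where "i = md (int a - 6)"
          have 1: "md (int i + 2) = b" unfolding i_def e[symmetric] by (rule mdc) (simp add: mdsimps)
          have "md (int i + 6) = md (int a)" unfolding i_def by (rule mdc) (simp add: mdsimps)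
          then have 2: "md (int i + 6) = a" using a md_nat by simp
          have "blkT i = {v + a, v + b, thYY a b}" using True F2 F3 F4 v13 unfolding bt thYY_def d_def[symmetric] Let_def i_def[symmetric] 1 2
            by auto
          then show ?thesis using inBT[of i] md_lt i_def by simp
        next
          case F5: False
          show ?thesis
          proof (cases "d = 6")
            case True
            then have e: "md (int a + 6) = b" using md_sub_eq[of b a 6] b m2 d_def by simp
            have "blkT a = {v + a, v + b, thYY a b}" using True F2 F3 F4 v13 unfolding bt thYY_def d_def[symmetric] Let_def e
              by auto
            then show ?thesis using inBT[OF a] by simp
          next
            case F6: False
            show ?thesis
            proof (cases "d = v - 6")
              case True
              then have e: "md (int a + (-6)) = b" using md_sub_eq[of b a "-6"] b n2 d_def by simp
              have 1: "md (int b + 2) = md (int a - 4)" unfolding e[symmetric] by (rule mdc) (simp add: mdsimps)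
              have "md (int b + 6) = md (int a)" unfolding e[symmetric] by (rule mdc) (simp add: mdsimps)
              then have 2: "md (int b + 6) = a" using a md_nat by simp
              have "blkT b = {v + a, v + b, thYY a b}" using True F2 F3 F4 F5 v13 unfolding bt thYY_def d_def[symmetric] Let_def 1 2
                by auto
              then show ?thesis using inBT[OF b] by simp
            next
              case F7: False
              have th: "thYY a b = md ((int a + int b) * int (hh + 1))"
                using F2 F3 F4 F5 F6 F7 unfolding thYY_def d_def[symmetric] Let_def by simp
              define j where "j = md ((int a + int b) * int (hh + 1))"
              have jl: "j < v" unfolding j_def by (rule md_lt)
              have F1: "int v dvd (2 * int j - int a - int b)"
              proof -
                have "2 * int j - int a - int b = int v * ((int a + int b) - 2 * (((int a + int b) * int (hh+1)) div int v))"
                  unfolding j_def int_md minus_div_mult_eq_mod[symmetric] ivh by (simp add: algebra_simps)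
                then show ?thesis by simp
              qed
              define c where "c = md (int b - int j)"
              have cl: "c < v" unfolding c_def by (rule md_lt)
              have F2': "int v dvd (int c - (int b - int j))" unfolding c_def int_md
                by (simp add: minus_div_mult_eq_mod[symmetric])
              have dc: "md (int b - int a) = md (2 * int c)"
              proof (rule mdc)
                have e: "int b - int a - 2 * int c = (2 * int j - int a - int b) - 2 * (int c - (int b - int j))"
                  by (simp add: algebra_simps)
                show "int v dvd (int b - int a - 2 * int c)" unfolding e
                  by (rule dvd_diff[OF F1 dvd_mult[OF F2']])
              qed
              have c4: "4 \<le> c"
              proof (rule ccontr)
                assume "\<not> 4 \<le> c"
                then have "md (2 * int c) = 2 * c" using v13 md_num[of "2 * int c"] by simp
                then have "d = 2 * c" using dc d_def by simp
                moreover have "d \<noteq> 0"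
                proof (cases "a \<le> b")
                  case True
                  then have "d = nat (int b - int a)" unfolding d_def using b by (intro md_range) auto
                  then show ?thesis using True ab by simp
                next
                  case False
                  then have "d = nat (int b - int a + int v)" unfolding d_def using a by (intro md_neg) auto
                  then show ?thesis using False a by simp
                qed
                ultimately show False using \<open>\<not> 4 \<le> c\<close> F2 F3 F4 F5 F6 F7 by auto
              qed
              have c5: "c + 4 \<le> v"
              proof (rule ccontr)
                assume "\<not> c + 4 \<le> v"
                then have "md (2 * int c) = nat (2 * int c - int v)" using cl v13 by (intro md_big) auto
                then have "md (2 * int c) = 2 * c - v" by simp
                then have "d = 2 * c - v" using dc d_def by simp
                then show False using \<open>\<not> c + 4 \<le> v\<close> cl F2 F3 F4 F5 F6 F7 vv by presburger
              qed
              have F1': "md (2 * int j - int b) = a"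
              proof -
                have "md (2 * int j - int b) = md (int a)" by (rule mdc) (use F1 in \<open>simp add: algebra_simps\<close>)
                then show ?thesis using a md_nat by simp
              qed
              show ?thesis
              proof (cases "c \<le> hh")
                case True
                have 1: "md (int j + int c) = b"
                proof -
                  have "md (int j + int c) = md (int b)" unfolding c_def by (rule mdc) (simp add: mdsimps)
                  then show ?thesis using b md_nat by simp
                qed
                have 2: "md (int j - int c) = a"
                  unfolding F1'[symmetric] c_def by (rule mdc) (simp add: mdsimps)
                have "blkM j c = {v + a, v + b, thYY a b}" unfolding blkM_def th j_def[symmetric] 1 2 by auto
                then show ?thesis using inBM[OF jl c4 True] by simp
              next
                case False
                define t where "t = v - c"
                have t4: "4 \<le> t" "t \<le> hh" using c5 False vv unfolding t_def by auto
                have ti: "int t = int v - int c" using cl unfolding t_def by simp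
                have 1: "md (int j - int t) = b"
                proof -
                  have "md (int j - int t) = md (int b)" unfolding ti c_def by (rule mdc) (simp add: mdsimps)
                  then show ?thesis using b md_nat by simp
                qed
                have 2: "md (int j + int t) = a"
                  unfolding F1'[symmetric] ti c_def by (rule mdc) (simp add: mdsimps)
                have "blkM j t = {v + a, v + b, thYY a b}" unfolding blkM_def th j_def[symmetric] 1 2 by auto
                then show ?thesis using inBM[OF jl t4] by simp
              qed
            qed
          qed
        qed
      qed
    qed
  qed
qed

definition lineF :: "nat \<Rightarrow> nat \<Rightarrow> nat" where
  "lineF a b = (let d = (b + 7 - a) mod 7 in if d = 1 \<or> d = 3 then a else if d = 6 \<or> d = 4 then b
      else if d = 2 then (a + 6) mod 7 else (a + 4) mod 7)"

lemma lineF_ok: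
  assumes "a < 7" "b < (7::nat)" "a \<noteq> b"
  shows "lineF a b < 7 \<and> {a, b, thF a b} = {lineF a b, (lineF a b + 1) mod 7, (lineF a b + 3) mod 7}"
proof -
  have "a = 0 \<or> a = 1 \<or> a = 2 \<or> a = 3 \<or> a = 4 \<or> a = 5 \<or> a = 6" using assms by presburger
  moreover have "b = 0 \<or> b = 1 \<or> b = 2 \<or> b = 3 \<or> b = 4 \<or> b = 5 \<or> b = 6" using assms by presburger
  ultimately show ?thesis using assms(3)
    by (elim disjE) (auto simp: lineF_def thF_def dF_def)
qed

lemma exSS:
  assumes a: "a < 7" and b: "b < 7" and ab: "a \<noteq> b"
  shows "{2*v + a, 2*v + b, 2*v + thF a b} \<in> BN"
proof -
  define l where "l = lineF a b"
  have l: "l < 7" "{a, b, thF a b} = {l, (l + 1) mod 7, (l + 3) mod 7}"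
    using lineF_ok[OF a b ab] l_def by auto
  have "(\<lambda>x. 2*v + x) ` {a, b, thF a b} = (\<lambda>x. 2*v + x) ` {l, (l + 1) mod 7, (l + 3) mod 7}"
    using l(2) by simp
  then have "{2*v + a, 2*v + b, 2*v + thF a b} = blkF l" unfolding blkF_def by simp
  then show ?thesis using inBF[OF l(1)] by simp
qed

lemma ex_block:
  assumes x: "x < 2*v+7" and y: "y < 2*v+7" and xy: "x \<noteq> y" and nx: "\<not> (x < v \<and> y < v)"
  shows "{x, y, third x y} \<in> BN"
proof -
  consider (XY) "x < v" "v \<le> y" "y < 2*v" | (YX) "y < v" "v \<le> x" "x < 2*v"
    | (XS) "x < v" "2*v \<le> y" | (SX) "y < v" "2*v \<le> x"
    | (YY) "v \<le> x" "x < 2*v" "v \<le> y" "y < 2*v"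
    | (YS) "v \<le> x" "x < 2*v" "2*v \<le> y" | (SY) "v \<le> y" "y < 2*v" "2*v \<le> x"
    | (SS) "2*v \<le> x" "2*v \<le> y"
    using nx by linarith
  then show ?thesis
  proof cases
    case XY
    have "third x y = thXY x (y - v)" using XY unfolding third_def by simp
    then show ?thesis using exXY[of x "y - v"] XY by simp
  next
    case YX
    have "third x y = thXY y (x - v)" using YX unfolding third_def by simp
    then show ?thesis using exXY[of y "x - v"] YX by (simp add: insert_commute)
  next
    case XS
    have "third x y = v + md (int x + int (y - 2*v) - 3)" using XS v13 unfolding third_def by simp
    then show ?thesis using exXS[of x "y - 2*v"] XS y by simp
  next
    case SX
    have "third x y = v + md (int y + int (x - 2*v) - 3)" using SX v13 unfolding third_def by simp
    then show ?thesis using exXS[of y "x - 2*v"] SX x by (simp add: insert_commute)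
  next
    case YY
    have "third x y = thYY (x - v) (y - v)" using YY unfolding third_def by simp
    then show ?thesis using exYY[of "x - v" "y - v"] YY xy by simp
  next
    case YS
    have "third x y = md (int (x - v) + 3 - int (y - 2*v))" using YS unfolding third_def by simp
    then show ?thesis using exYS[of "x - v" "y - 2*v"] YS y by simp
  next
    case SY
    have "third x y = md (int (y - v) + 3 - int (x - 2*v))" using SY unfolding third_def by simp
    then show ?thesis using exYS[of "y - v" "x - 2*v"] SY x by (simp add: insert_commute)
  next
    case SS
    have "third x y = 2*v + thF (x - 2*v) (y - 2*v)" using SS v13 unfolding third_def by simp
    then show ?thesis using exSS[of "x - 2*v" "y - 2*v"] SS x y xy by simp
  qed
qed

lemma card3: "a \<noteq> b \<Longrightarrow> a \<noteq> c \<Longrightarrow> b \<noteq> c \<Longrightarrow> card {a, b, c} = 3" by simp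


lemma md_dist: "md z \<noteq> md w" if "0 < w - z" "w - z < int v" for z w
proof
  assume "md z = md w"
  then have "int v dvd (w - z)" using md_eq_dvd by (metis dvd_minus_iff minus_diff_eq)
  then show False using that zdvd_imp_le by fastforce
qed

lemma BN_props:
  assumes "b \<in> BN"
  shows "b \<subseteq> {..<2*v+7}" "card b = 3" "\<forall>x\<in>b. \<forall>y\<in>b. x < v \<longrightarrow> y < v \<longrightarrow> x = y"
    "\<forall>x\<in>b. \<forall>y\<in>b. x \<noteq> y \<longrightarrow> b = {x, y, third x y}"
proof -
  have l: "md z < v" for z by (rule md_lt)
  have vv: "v = 2*hh+1" by (rule hh2)
  have "(b \<subseteq> {..<2*v+7}) \<and> card b = 3 \<and> (\<forall>x\<in>b. \<forall>y\<in>b. x < v \<longrightarrow> y < v \<longrightarrow> x = y) \<and>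
    (\<forall>x\<in>b. \<forall>y\<in>b. x \<noteq> y \<longrightarrow> b = {x, y, third x y})"
    using assms unfolding BN_def
  proof (elim UnE)
    assume "b \<in> BM"
    then obtain j t where jt: "j < v" "4 \<le> t" "t \<le> hh" "b = blkM j t" unfolding BM_def PM_def by auto
    have ne: "md (int j - int t) \<noteq> md (int j + int t)" using jt vv by (intro md_dist) auto
    have "\<forall>x\<in>b. \<forall>y\<in>b. x \<noteq> y \<longrightarrow> b = {x, y, third x y}"
      unfolding jt(4) blkM_def by (rule tri[OF thM[OF jt(1-3)]])
    moreover have "b \<subseteq> {..<2*v+7}" using jt l[of "int j - int t"] l[of "int j + int t"] ne unfolding jt(4) blkM_def by auto
    moreover have "card b = 3" unfolding jt(4) blkM_def by (rule card3) (use jt l[of "int j - int t"] l[of "int j + int t"] ne in auto)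
    moreover have "\<forall>x\<in>b. \<forall>y\<in>b. x < v \<longrightarrow> y < v \<longrightarrow> x = y" using jt l[of "int j - int t"] l[of "int j + int t"] ne unfolding jt(4) blkM_def by auto
    ultimately show ?thesis by blast
  next
    assume "b \<in> BS"
    then obtain j e where je: "j < v" "e < 7" "b = blkS j e" unfolding BS_def PS_def by auto
    have "\<forall>x\<in>b. \<forall>y\<in>b. x \<noteq> y \<longrightarrow> b = {x, y, third x y}"
      unfolding je(3) blkS_def by (rule tri[OF thS[OF je(1-2)]])
    moreover have "b \<subseteq> {..<2*v+7}" using je l[of "int j + int e - 3"] unfolding je(3) blkS_def by auto
    moreover have "card b = 3" unfolding je(3) blkS_def by (rule card3) (use je l[of "int j + int e - 3"] in auto)
    moreover have "\<forall>x\<in>b. \<forall>y\<in>b. x < v \<longrightarrow> y < v \<longrightarrow> x = y" using je l[of "int j + int e - 3"] unfolding je(3) blkS_def by auto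
    ultimately show ?thesis by blast
  next
    assume "b \<in> BT"
    then obtain i where i: "i < v" "b = blkT i" unfolding BT_def by auto
    have ne: "md (int i) \<noteq> md (int i + 2)" "md (int i) \<noteq> md (int i + 6)" "md (int i + 2) \<noteq> md (int i + 6)"
      using v13 by (intro md_dist; simp)+
    have "md (int i) = i" using i md_nat by simp
    have "\<forall>x\<in>b. \<forall>y\<in>b. x \<noteq> y \<longrightarrow> b = {x, y, third x y}"
      unfolding i(2) blkT_def by (rule tri[OF thT[OF i(1)]])
    moreover have "b \<subseteq> {..<2*v+7}" using i l[of "int i + 2"] l[of "int i + 6"] ne \<open>md (int i) = i\<close> unfolding i(2) blkT_def by auto
    moreover have "card b = 3" unfolding i(2) blkT_def by (rule card3) (use i l[of "int i + 2"] l[of "int i + 6"] ne \<open>md (int i) = i\<close> in auto)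
    moreover have "\<forall>x\<in>b. \<forall>y\<in>b. x < v \<longrightarrow> y < v \<longrightarrow> x = y" using i l[of "int i + 2"] l[of "int i + 6"] ne \<open>md (int i) = i\<close> unfolding i(2) blkT_def by auto
    ultimately show ?thesis by blast
  next
    assume "b \<in> BF"
    then obtain e where e: "e < 7" "b = blkF e" unfolding BF_def by auto
    have "e \<noteq> (e+1) mod 7 \<and> e \<noteq> (e+3) mod 7 \<and> (e+1) mod 7 \<noteq> (e+3) mod 7" using e(1) by presburger
    have "\<forall>x\<in>b. \<forall>y\<in>b. x \<noteq> y \<longrightarrow> b = {x, y, third x y}"
      unfolding e(2) blkF_def by (rule tri[OF thFano[OF e(1)]])
    moreover have "b \<subseteq> {..<2*v+7}" using e \<open>e \<noteq> (e+1) mod 7 \<and> e \<noteq> (e+3) mod 7 \<and> (e+1) mod 7 \<noteq> (e+3) mod 7\<close> unfolding e(2) blkF_def by auto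
    moreover have "card b = 3" unfolding e(2) blkF_def by (rule card3) (use e \<open>e \<noteq> (e+1) mod 7 \<and> e \<noteq> (e+3) mod 7 \<and> (e+1) mod 7 \<noteq> (e+3) mod 7\<close> in auto)
    moreover have "\<forall>x\<in>b. \<forall>y\<in>b. x < v \<longrightarrow> y < v \<longrightarrow> x = y" using e \<open>e \<noteq> (e+1) mod 7 \<and> e \<noteq> (e+3) mod 7 \<and> (e+1) mod 7 \<noteq> (e+3) mod 7\<close> unfolding e(2) blkF_def by auto
    ultimately show ?thesis by blast
  qed
  then show "b \<subseteq> {..<2*v+7}" "card b = 3" "\<forall>x\<in>b. \<forall>y\<in>b. x < v \<longrightarrow> y < v \<longrightarrow> x = y"
    "\<forall>x\<in>b. \<forall>y\<in>b. x \<noteq> y \<longrightarrow> b = {x, y, third x y}" by auto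
qed

lemma sts_new:
  assumes old: "STS v {..<v} B0"
  shows "STS (2*v+7) {..<2*v+7} (B0 \<union> BN)"
proof -
  have ob: "\<forall>b\<in>B0. b \<subseteq> {..<v} \<and> card b = 3"
    and op: "\<forall>x\<in>{..<v}. \<forall>y\<in>{..<v}. x \<noteq> y \<longrightarrow> (\<exists>!b. b \<in> B0 \<and> {x, y} \<subseteq> b)"
    using old unfolding STS_def is_STS_def by auto
  have blocks: "\<forall>b\<in>B0 \<union> BN. b \<subseteq> {..<2*v+7} \<and> card b = 3"
    using ob BN_props(1,2) by fastforce
  have pairs: "\<exists>!b. b \<in> B0 \<union> BN \<and> {x, y} \<subseteq> b"
    if x: "x < 2*v+7" and y: "y < 2*v+7" and xy: "x \<noteq> y" for x y
  proof (cases "x < v \<and> y < v")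
    case True
    then obtain b where b: "b \<in> B0" "{x,y} \<subseteq> b" and u: "\<And>c. c \<in> B0 \<Longrightarrow> {x,y} \<subseteq> c \<Longrightarrow> c = b"
      using op xy by (metis lessThan_iff)
    show ?thesis
    proof
      show "b \<in> B0 \<union> BN \<and> {x, y} \<subseteq> b" using b by auto
    next
      fix c assume c: "c \<in> B0 \<union> BN \<and> {x, y} \<subseteq> c"
      have "c \<notin> BN" using BN_props(3) True xy c by blast
      then show "c = b" using u c by auto
    qed
  next
    case False
    show ?thesis
    proof
      show "{x, y, third x y} \<in> B0 \<union> BN \<and> {x, y} \<subseteq> {x, y, third x y}"
        using ex_block[OF x y xy False] by auto
    next
      fix c assume c: "c \<in> B0 \<union> BN \<and> {x, y} \<subseteq> c"
      have "c \<notin> B0" using ob False c by auto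
      then have "c \<in> BN" using c by auto
      then show "c = {x, y, third x y}" using BN_props(4) c xy by blast
    qed
  qed
  show ?thesis unfolding STS_def is_STS_def using blocks pairs by auto
qed


end

context cons begin
definition pp :: "nat \<Rightarrow> int" where "pp j = (-1)^j"
definition wM :: "nat \<Rightarrow> nat \<Rightarrow> int" where
  "wM j t = (if t \<le> 6 then pp j else (-1)^t) * (if (j = v-2 \<and> t = 4) \<or> (j = v-1 \<and> t = 5) then -1 else 1)"
definition eps :: "nat \<Rightarrow> int" where "eps e = (if e = 0 \<or> e = 3 then 1 else -1)"
definition fS :: "nat \<Rightarrow> nat \<Rightarrow> bool" where
  "fS j e = ((j = v-3 \<and> (e = 0 \<or> e = 4)) \<or> (j = v-2 \<and> e = 1) \<or> (j = v-1 \<and> e = 5))"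
definition wS :: "nat \<Rightarrow> nat \<Rightarrow> int" where
  "wS j e = eps e * pp j * (if fS j e then -1 else 1)"
definition wT :: "nat \<Rightarrow> int" where "wT i = - pp i"
definition wF :: "nat \<Rightarrow> int" where "wF e = (if e = 2 \<or> e = 3 \<or> e = 4 then -1 else 1)"

lemma inj_M: "inj_on (\<lambda>(j,t). blkM j t) PM"
proof (rule inj_onI, clarify)
  fix j t j' t' assume a: "(j,t) \<in> PM" "(j',t') \<in> PM" and eq: "blkM j t = blkM j' t'"
  have jt: "j < v" "4 \<le> t" "t \<le> hh" "j' < v" "4 \<le> t'" "t' \<le> hh" using a unfolding PM_def by auto
  have vv: "v = 2*hh+1" by (rule hh2)
  have "j' \<in> blkM j t" using eq unfolding blkM_def by auto
  then have jj: "j' = j" using jt unfolding blkM_def by auto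
  have "v + md (int j - int t') \<in> blkM j t" using eq jj unfolding blkM_def by auto
  then have "md (int j - int t') = md (int j - int t) \<or> md (int j - int t') = md (int j + int t)"
    using jt unfolding blkM_def by auto
  moreover have "md (int j - int t') \<noteq> md (int j + int t)" using jt vv by (intro md_dist) auto
  moreover have "t' \<noteq> t \<Longrightarrow> md (int j - int t') \<noteq> md (int j - int t)"
  proof -
    assume "t' \<noteq> t"
    then consider "t < t'" | "t' < t" by linarith
    then show ?thesis
    proof cases
      case 1 then show ?thesis using jt vv by (intro md_dist) auto
    next
      case 2
      have "md (int j - int t) \<noteq> md (int j - int t')" using jt vv 2 by (intro md_dist) auto
      then show ?thesis by metis
    qed
  qed
  ultimately show "j = j' \<and> t = t'" using jj by auto
qed

lemma inj_S: "inj_on (\<lambda>(j,e). blkS j e) PS"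
proof (rule inj_onI, clarify)
  fix j e j' e' assume a: "(j,e) \<in> PS" "(j',e') \<in> PS" and eq: "blkS j e = blkS j' e'"
  have je: "j < v" "e < 7" "j' < v" "e' < 7" using a unfolding PS_def by auto
  have l: "md z < v" for z by (rule md_lt)
  have "j' \<in> blkS j e" using eq unfolding blkS_def by auto
  then have "j' = j" using je l[of "int j + int e - 3"] unfolding blkS_def by auto
  moreover have "2*v + e' \<in> blkS j e" using eq unfolding blkS_def by auto
  then have "e' = e" using je l[of "int j + int e - 3"] unfolding blkS_def by auto
  ultimately show "j = j' \<and> e = e'" by auto
qed

lemma inj_T: "inj_on blkT {..<v}"
proof (rule inj_onI)
  fix i i' assume a: "i \<in> {..<v}" "i' \<in> {..<v}" and eq: "blkT i = blkT i'"
  have l: "md z < v" for z by (rule md_lt)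
  have mi: "md (int i) = i" "md (int i') = i'" using a md_nat by auto
  have "v + i' \<in> blkT i" using eq unfolding blkT_def by auto
  then have c: "i' = i \<or> i' = md (int i + 2) \<or> i' = md (int i + 6)" unfolding blkT_def by auto
  show "i = i'"
  proof (rule ccontr)
    assume ne: "i \<noteq> i'"
    have e8: "md (int i' + 2) = md (int i + 8) \<or> md (int i' + 6) = md (int i + 8)"
    proof -
      have "i' = md (int i + 2) \<or> i' = md (int i + 6)" using c ne by auto
      then show ?thesis
      proof
        assume h: "i' = md (int i + 2)"
        have "md (int i' + 6) = md (int i + 8)" unfolding h by (rule mdc) (simp add: mdsimps)
        then show ?thesis by simp
      next
        assume h: "i' = md (int i + 6)"
        have "md (int i' + 2) = md (int i + 8)" unfolding h by (rule mdc) (simp add: mdsimps)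
        then show ?thesis by simp
      qed
    qed
    have "v + md (int i' + 2) \<in> blkT i" "v + md (int i' + 6) \<in> blkT i" using eq unfolding blkT_def by auto
    then have "v + md (int i + 8) \<in> blkT i" using e8 by auto
    then have "md (int i + 8) = md (int i) \<or> md (int i + 8) = md (int i + 2) \<or> md (int i + 8) = md (int i + 6)"
      using mi unfolding blkT_def by auto
    moreover have "md (int i) \<noteq> md (int i + 8)" "md (int i + 2) \<noteq> md (int i + 8)" "md (int i + 6) \<noteq> md (int i + 8)"
      using v13 by (intro md_dist; simp)+
    ultimately show False by auto
  qed
qed

lemma Fline_inj:
  assumes "l < 7" "l' < (7::nat)" "l' \<in> {l, (l+1) mod 7, (l+3) mod 7}" "(l'+1) mod 7 \<in> {l, (l+1) mod 7, (l+3) mod 7}"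
  shows "l = l'"
proof -
  have L: "l = 0 \<or> l = 1 \<or> l = 2 \<or> l = 3 \<or> l = 4 \<or> l = 5 \<or> l = 6" using assms by presburger
  have L': "l' = 0 \<or> l' = 1 \<or> l' = 2 \<or> l' = 3 \<or> l' = 4 \<or> l' = 5 \<or> l' = 6" using assms by presburger
  show ?thesis using L L' assms(3,4) by (elim disjE) simp_all
qed

lemma inj_F: "inj_on blkF {..<7}"
proof (rule inj_onI)
  fix l l' assume a: "l \<in> {..<7}" "l' \<in> {..<7}" and eq: "blkF l = blkF l'"
  have "2*v + l' \<in> blkF l'" "2*v + (l'+1) mod 7 \<in> blkF l'" unfolding blkF_def by simp_all
  then have "2*v + l' \<in> blkF l" "2*v + (l'+1) mod 7 \<in> blkF l" using eq by simp_all
  then have m: "l' \<in> {l, (l+1) mod 7, (l+3) mod 7}" "(l'+1) mod 7 \<in> {l, (l+1) mod 7, (l+3) mod 7}"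
    unfolding blkF_def by simp_all
  have "l < 7" "l' < 7" using a by auto
  then show "l = l'" using m by (rule Fline_inj)
qed

definition gg :: "(nat set \<Rightarrow> int) \<Rightarrow> nat set set \<Rightarrow> nat set \<Rightarrow> int" where
  "gg f0 B0 b = (if b \<in> B0 then f0 b
     else if b \<in> BM then (\<lambda>(j,t). wM j t) (inv_into PM (\<lambda>(j,t). blkM j t) b)
     else if b \<in> BS then (\<lambda>(j,e). wS j e) (inv_into PS (\<lambda>(j,e). blkS j e) b)
     else if b \<in> BT then wT (inv_into {..<v} blkT b)
     else wF (inv_into {..<7} blkF b))"

lemma BM_shape: "b \<in> BM \<Longrightarrow> (\<exists>x\<in>b. x < v) \<and> (\<forall>x\<in>b. x < 2*v) \<and> (\<exists>x\<in>b. v \<le> x)"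
  unfolding BM_def PM_def blkM_def using md_lt by fastforce
lemma BS_shape: "b \<in> BS \<Longrightarrow> (\<exists>x\<in>b. x < v) \<and> (\<exists>x\<in>b. 2*v \<le> x)"
  unfolding BS_def PS_def blkS_def by fastforce
lemma BT_shape: "b \<in> BT \<Longrightarrow> (\<forall>x\<in>b. v \<le> x \<and> x < 2*v) \<and> (\<exists>x\<in>b. v \<le> x)"
  unfolding BT_def blkT_def using md_lt by fastforce
lemma BF_shape: "b \<in> BF \<Longrightarrow> (\<forall>x\<in>b. 2*v \<le> x) \<and> (\<exists>x\<in>b. v \<le> x)"
  unfolding BF_def blkF_def by auto

context
  fixes B0 :: "nat set set" and f0 :: "nat set \<Rightarrow> int"
  assumes B0sub: "\<forall>b\<in>B0. b \<subseteq> {..<v}"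
begin

lemma notB0: "b \<in> BM \<union> BS \<union> BT \<union> BF \<Longrightarrow> b \<notin> B0"
  using B0sub BM_shape BS_shape BT_shape BF_shape by fastforce

lemma gM: "q \<in> PM \<Longrightarrow> gg f0 B0 ((\<lambda>(j,t). blkM j t) q) = (\<lambda>(j,t). wM j t) q"
proof -
  assume q: "q \<in> PM"
  have b: "(\<lambda>(j,t). blkM j t) q \<in> BM" using q unfolding BM_def by auto
  then show ?thesis using notB0[of "(\<lambda>(j,t). blkM j t) q"] inv_into_f_f[OF inj_M q]
    unfolding gg_def by auto
qed

lemma gS: "q \<in> PS \<Longrightarrow> gg f0 B0 ((\<lambda>(j,e). blkS j e) q) = (\<lambda>(j,e). wS j e) q"
proof -
  assume q: "q \<in> PS"
  have b: "(\<lambda>(j,e). blkS j e) q \<in> BS" using q unfolding BS_def by auto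
  have "(\<lambda>(j,e). blkS j e) q \<notin> BM" using BS_shape[OF b] BM_shape by fastforce
  then show ?thesis using b notB0[of "(\<lambda>(j,e). blkS j e) q"] inv_into_f_f[OF inj_S q]
    unfolding gg_def by auto
qed

lemma gT: "i \<in> {..<v} \<Longrightarrow> gg f0 B0 (blkT i) = wT i"
proof -
  assume q: "i \<in> {..<v}"
  have b: "blkT i \<in> BT" using q unfolding BT_def by auto
  have "blkT i \<notin> BM" "blkT i \<notin> BS" using BT_shape[OF b] BM_shape BS_shape by fastforce+
  then show ?thesis using b notB0[of "blkT i"] inv_into_f_f[OF inj_T q]
    unfolding gg_def by auto
qed

lemma gF: "l \<in> {..<7} \<Longrightarrow> gg f0 B0 (blkF l) = wF l"
proof -
  assume q: "l \<in> {..<7}"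
  have b: "blkF l \<in> BF" using q unfolding BF_def by auto
  have "blkF l \<notin> BM" "blkF l \<notin> BS" "blkF l \<notin> BT"
    using BF_shape[OF b] BM_shape BS_shape BT_shape v13 by fastforce+
  then show ?thesis using b notB0[of "blkF l"] inv_into_f_f[OF inj_F q]
    unfolding gg_def by auto
qed

end

lemma fam_sum:
  assumes inj: "inj_on blk P" and gv: "\<And>q. q \<in> P \<Longrightarrow> g (blk q) = w q"
  shows "(\<Sum>b\<in>{b\<in>blk ` P. x \<in> b}. g b) = (\<Sum>q\<in>{q\<in>P. x \<in> blk q}. (w q :: int))"
proof -
  have e: "{b\<in>blk ` P. x \<in> b} = blk ` {q\<in>P. x \<in> blk q}" by auto
  have i: "inj_on blk {q\<in>P. x \<in> blk q}" by (rule inj_on_subset[OF inj]) auto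
  show ?thesis unfolding e sum.reindex[OF i] comp_def by (rule sum.cong) (auto simp: gv)
qed

lemma finPM: "finite PM" unfolding PM_def by simp
lemma finPS: "finite PS" unfolding PS_def by simp

lemma sum_decomp:
  fixes B0 :: "nat set set" and f0 :: "nat set \<Rightarrow> int"
  assumes B0sub: "\<forall>b\<in>B0. b \<subseteq> {..<v}" and finB0: "finite B0"
  shows "(\<Sum>b\<in>{b\<in>B0 \<union> BN. x\<in>b}. gg f0 B0 b) =
    (\<Sum>b\<in>{b\<in>B0. x\<in>b}. f0 b) + (\<Sum>q\<in>{q\<in>PM. x \<in> (\<lambda>(j,t). blkM j t) q}. (\<lambda>(j,t). wM j t) q)
    + (\<Sum>q\<in>{q\<in>PS. x \<in> (\<lambda>(j,e). blkS j e) q}. (\<lambda>(j,e). wS j e) q)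
    + (\<Sum>i\<in>{i\<in>{..<v}. x \<in> blkT i}. wT i) + (\<Sum>l\<in>{l\<in>{..<7}. x \<in> blkF l}. wF l)"
proof -
  define A0 where "A0 = {b\<in>B0. x\<in>b}"
  define AM where "AM = {b\<in>BM. x\<in>b}"
  define AS where "AS = {b\<in>BS. x\<in>b}"
  define AT where "AT = {b\<in>BT. x\<in>b}"
  define AF where "AF = {b\<in>BF. x\<in>b}"
  have e: "{b\<in>B0 \<union> BN. x\<in>b} = A0 \<union> (AM \<union> (AS \<union> (AT \<union> AF)))"
    unfolding A0_def AM_def AS_def AT_def AF_def BN_def by auto
  have fin: "finite A0" "finite AM" "finite AS" "finite AT" "finite AF"
    unfolding A0_def AM_def AS_def AT_def AF_def BM_def BS_def BT_def BF_def
    using finB0 finPM finPS by auto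
  have d1: "A0 \<inter> (AM \<union> (AS \<union> (AT \<union> AF))) = {}"
    unfolding A0_def AM_def AS_def AT_def AF_def using notB0[OF B0sub] by auto
  have d2: "AM \<inter> (AS \<union> (AT \<union> AF)) = {}"
    unfolding AM_def AS_def AT_def AF_def using BM_shape BS_shape BT_shape BF_shape by fastforce
  have d3: "AS \<inter> (AT \<union> AF) = {}"
    unfolding AS_def AT_def AF_def using BS_shape BT_shape BF_shape by fastforce
  have d4: "AT \<inter> AF = {}"
    unfolding AT_def AF_def using BT_shape BF_shape v13 by fastforce
  have s0: "(\<Sum>b\<in>A0. gg f0 B0 b) = (\<Sum>b\<in>{b\<in>B0. x\<in>b}. f0 b)"
    unfolding A0_def by (rule sum.cong) (auto simp: gg_def)
  have sM: "(\<Sum>b\<in>AM. gg f0 B0 b) = (\<Sum>q\<in>{q\<in>PM. x \<in> (\<lambda>(j,t). blkM j t) q}. (\<lambda>(j,t). wM j t) q)"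
    unfolding AM_def BM_def by (rule fam_sum[OF inj_M]) (rule gM[OF B0sub], assumption)
  have sS: "(\<Sum>b\<in>AS. gg f0 B0 b) = (\<Sum>q\<in>{q\<in>PS. x \<in> (\<lambda>(j,e). blkS j e) q}. (\<lambda>(j,e). wS j e) q)"
    unfolding AS_def BS_def by (rule fam_sum[OF inj_S]) (rule gS[OF B0sub], assumption)
  have sT: "(\<Sum>b\<in>AT. gg f0 B0 b) = (\<Sum>i\<in>{i\<in>{..<v}. x \<in> blkT i}. wT i)"
    unfolding AT_def BT_def by (rule fam_sum[OF inj_T]) (rule gT[OF B0sub], assumption)
  have sF: "(\<Sum>b\<in>AF. gg f0 B0 b) = (\<Sum>l\<in>{l\<in>{..<7}. x \<in> blkF l}. wF l)"
    unfolding AF_def BF_def by (rule fam_sum[OF inj_F]) (rule gF[OF B0sub], assumption)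
  show ?thesis unfolding e
    using fin d1 d2 d3 d4 s0 sM sS sT sF
    by (simp add: sum.union_disjoint add.assoc)
qed

lemma sum_prod_filter:
  fixes w :: "'a \<Rightarrow> 'b \<Rightarrow> int"
  assumes "finite A" "finite B"
  shows "(\<Sum>q\<in>{q\<in>A \<times> B. x \<in> (\<lambda>(a,b). F a b) q}. (\<lambda>(a,b). w a b) q)
       = (\<Sum>b\<in>B. \<Sum>a\<in>A. if x \<in> F a b then w a b else 0)"
proof -
  have "(\<Sum>q\<in>{q\<in>A \<times> B. x \<in> (\<lambda>(a,b). F a b) q}. (\<lambda>(a,b). w a b) q)
     = (\<Sum>q\<in>A \<times> B. if x \<in> (\<lambda>(a,b). F a b) q then (\<lambda>(a,b). w a b) q else 0)"
    using assms by (intro sum.inter_filter) simp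
  also have "\<dots> = (\<Sum>a\<in>A. \<Sum>b\<in>B. if x \<in> F a b then w a b else 0)"
    unfolding sum.cartesian_product by (intro sum.cong refl) (auto split: prod.splits)
  also have "\<dots> = (\<Sum>b\<in>B. \<Sum>a\<in>A. if x \<in> F a b then w a b else 0)" by (rule sum.swap)
  finally show ?thesis .
qed

lemma md_move: "j < v \<Longrightarrow> y < v \<Longrightarrow> (md (int j - c) = y) \<longleftrightarrow> (j = md (int y + c))"
proof
  assume j: "j < v" and y: "y < v" and h: "md (int j - c) = y"
  have "md (int y + c) = md (int j)" unfolding h[symmetric] by (rule mdc) (simp add: mdsimps)
  then show "j = md (int y + c)" using j md_nat by simp
next
  assume j: "j < v" and y: "y < v" and h: "j = md (int y + c)"
  have "md (int j - c) = md (int y)" unfolding h by (rule mdc) (simp add: mdsimps)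
  then show "md (int j - c) = y" using y md_nat by simp
qed

lemma sum_two: "a < v \<Longrightarrow> b < v \<Longrightarrow> a \<noteq> b \<Longrightarrow>
   (\<Sum>j\<in>{..<v}. if j = a \<or> j = b then f j else 0) = f a + (f b :: int)"
proof -
  assume h: "a < v" "b < v" "a \<noteq> b"
  have "(\<Sum>j\<in>{..<v}. if j = a \<or> j = b then f j else 0) = sum f {j\<in>{..<v}. j = a \<or> j = b}"
    by (rule sum.inter_filter[symmetric]) simp
  also have "{j\<in>{..<v}. j = a \<or> j = b} = {a, b}" using h by auto
  finally show ?thesis using h by simp
qed

lemma XM: "j < v \<Longrightarrow> (\<Sum>q\<in>{q\<in>PM. j \<in> (\<lambda>(j,t). blkM j t) q}. (\<lambda>(j,t). wM j t) q) = (\<Sum>t\<in>{4..hh}. wM j t)"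
proof -
  assume j: "j < v"
  have "(\<Sum>q\<in>{q\<in>PM. j \<in> (\<lambda>(j,t). blkM j t) q}. (\<lambda>(j,t). wM j t) q)
     = (\<Sum>t\<in>{4..hh}. \<Sum>j'\<in>{..<v}. if j \<in> blkM j' t then wM j' t else 0)"
    unfolding PM_def by (rule sum_prod_filter) auto
  also have "\<dots> = (\<Sum>t\<in>{4..hh}. \<Sum>j'\<in>{..<v}. if j' = j then wM j' t else 0)"
    by (intro sum.cong refl) (use j in \<open>auto simp: blkM_def\<close>)
  also have "\<dots> = (\<Sum>t\<in>{4..hh}. wM j t)" using j by simp
  finally show ?thesis .
qed

lemma XS: "j < v \<Longrightarrow> (\<Sum>q\<in>{q\<in>PS. j \<in> (\<lambda>(j,e). blkS j e) q}. (\<lambda>(j,e). wS j e) q) = (\<Sum>e<7. wS j e)"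
proof -
  assume j: "j < v"
  have "(\<Sum>q\<in>{q\<in>PS. j \<in> (\<lambda>(j,e). blkS j e) q}. (\<lambda>(j,e). wS j e) q)
     = (\<Sum>e\<in>{..<7}. \<Sum>j'\<in>{..<v}. if j \<in> blkS j' e then wS j' e else 0)"
    unfolding PS_def by (rule sum_prod_filter) auto
  also have "\<dots> = (\<Sum>e\<in>{..<7}. \<Sum>j'\<in>{..<v}. if j' = j then wS j' e else 0)"
    by (intro sum.cong refl) (use j in \<open>auto simp: blkS_def\<close>)
  also have "\<dots> = (\<Sum>e<7. wS j e)" using j by simp
  finally show ?thesis .
qed

lemma XT: "j < v \<Longrightarrow> {i\<in>{..<v}. j \<in> blkT i} = {}" unfolding blkT_def by auto
lemma XF: "j < v \<Longrightarrow> {l\<in>{..<7}. j \<in> blkF l} = {}" unfolding blkF_def by auto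

lemma YM: "y < v \<Longrightarrow> (\<Sum>q\<in>{q\<in>PM. v + y \<in> (\<lambda>(j,t). blkM j t) q}. (\<lambda>(j,t). wM j t) q)
   = (\<Sum>t\<in>{4..hh}. wM (md (int y + int t)) t + wM (md (int y - int t)) t)"
proof -
  assume y: "y < v"
  have vv: "v = 2*hh+1" by (rule hh2)
  have "(\<Sum>q\<in>{q\<in>PM. v + y \<in> (\<lambda>(j,t). blkM j t) q}. (\<lambda>(j,t). wM j t) q)
     = (\<Sum>t\<in>{4..hh}. \<Sum>j\<in>{..<v}. if v + y \<in> blkM j t then wM j t else 0)"
    unfolding PM_def by (rule sum_prod_filter) auto
  also have "\<dots> = (\<Sum>t\<in>{4..hh}. \<Sum>j\<in>{..<v}. if j = md (int y + int t) \<or> j = md (int y - int t) then wM j t else 0)"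
  proof (intro sum.cong refl)
    fix t j assume t: "t \<in> {4..hh}" and j: "j \<in> {..<v}"
    have "v + y \<in> blkM j t \<longleftrightarrow> md (int j - int t) = y \<or> md (int j + int t) = y"
      using j unfolding blkM_def by auto
    also have "\<dots> \<longleftrightarrow> j = md (int y + int t) \<or> j = md (int y - int t)"
      using md_move[of j y "int t"] md_move[of j y "- int t"] j y by auto
    finally show "(if v + y \<in> blkM j t then wM j t else 0) =
      (if j = md (int y + int t) \<or> j = md (int y - int t) then wM j t else 0)" by simp
  qed
  also have "\<dots> = (\<Sum>t\<in>{4..hh}. wM (md (int y + int t)) t + wM (md (int y - int t)) t)"
  proof (intro sum.cong refl sum_two)
    fix t assume t: "t \<in> {4..hh}"
    show "md (int y + int t) < v" "md (int y - int t) < v" by (rule md_lt)+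
    have "md (int y - int t) \<noteq> md (int y + int t)" using t vv by (intro md_dist) auto
    then show "md (int y + int t) \<noteq> md (int y - int t)" by metis
  qed
  finally show ?thesis .
qed

lemma YS: "y < v \<Longrightarrow> (\<Sum>q\<in>{q\<in>PS. v + y \<in> (\<lambda>(j,e). blkS j e) q}. (\<lambda>(j,e). wS j e) q)
   = (\<Sum>e<7. wS (md (int y + 3 - int e)) e)"
proof -
  assume y: "y < v"
  have "(\<Sum>q\<in>{q\<in>PS. v + y \<in> (\<lambda>(j,e). blkS j e) q}. (\<lambda>(j,e). wS j e) q)
     = (\<Sum>e\<in>{..<7}. \<Sum>j\<in>{..<v}. if v + y \<in> blkS j e then wS j e else 0)"
    unfolding PS_def by (rule sum_prod_filter) auto
  also have "\<dots> = (\<Sum>e\<in>{..<7}. \<Sum>j\<in>{..<v}. if j = md (int y + 3 - int e) then wS j e else 0)"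
  proof (intro sum.cong refl)
    fix e j :: nat assume e: "e \<in> {..<7}" and j: "j \<in> {..<v}"
    have "v + y \<in> blkS j e \<longleftrightarrow> md (int j - (3 - int e)) = y"
      using j y unfolding blkS_def by (auto simp: algebra_simps)
    also have "\<dots> \<longleftrightarrow> j = md (int y + 3 - int e)"
      using md_move[of j y "3 - int e"] j y by (auto simp: algebra_simps)
    finally show "(if v + y \<in> blkS j e then wS j e else 0) =
      (if j = md (int y + 3 - int e) then wS j e else 0)" by simp
  qed
  also have "\<dots> = (\<Sum>e<7. wS (md (int y + 3 - int e)) e)"
    using md_lt by (simp add: sum.delta)
  finally show ?thesis .
qed

lemma YT: "y < v \<Longrightarrow> (\<Sum>i\<in>{i\<in>{..<v}. v + y \<in> blkT i}. wT i) = wT y + wT (md (int y - 2)) + wT (md (int y - 6))"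
proof -
  assume y: "y < v"
  have "{i\<in>{..<v}. v + y \<in> blkT i} = {y, md (int y - 2), md (int y - 6)}"
  proof -
    have "v + y \<in> blkT i \<longleftrightarrow> i = y \<or> i = md (int y - 2) \<or> i = md (int y - 6)" if i: "i < v" for i
    proof -
      have "v + y \<in> blkT i \<longleftrightarrow> y = i \<or> md (int i - (-2)) = y \<or> md (int i - (-6)) = y"
        unfolding blkT_def by auto
      also have "\<dots> \<longleftrightarrow> i = y \<or> i = md (int y - 2) \<or> i = md (int y - 6)"
        using md_move[of i y "-2"] md_move[of i y "-6"] i y by auto
      finally show ?thesis .
    qed
    then show ?thesis using y md_lt by auto
  qed
  moreover have "y \<noteq> md (int y - 2)" "y \<noteq> md (int y - 6)" "md (int y - 2) \<noteq> md (int y - 6)"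
  proof -
    have "md (int y - 2) \<noteq> md (int y)" "md (int y - 6) \<noteq> md (int y)" "md (int y - 6) \<noteq> md (int y - 2)"
      using v13 by (intro md_dist; simp)+
    then show "y \<noteq> md (int y - 2)" "y \<noteq> md (int y - 6)" "md (int y - 2) \<noteq> md (int y - 6)"
      using y md_nat by auto
  qed
  ultimately show ?thesis by simp
qed

lemma YF: "y < v \<Longrightarrow> {l\<in>{..<7}. v + y \<in> blkF l} = {}" unfolding blkF_def by auto

lemma SM: "{q\<in>PM. 2*v + e \<in> (\<lambda>(j,t). blkM j t) q} = {}"
proof -
  have "2*v + e \<notin> blkM j t" if "j < v" for j t
    using that md_lt[of "int j - int t"] md_lt[of "int j + int t"] unfolding blkM_def by auto
  then show ?thesis unfolding PM_def by auto
qed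
lemma ST: "{i\<in>{..<v}. 2*v + e \<in> blkT i} = {}"
proof -
  have "2*v + e \<notin> blkT i" if "i < v" for i
    using that md_lt[of "int i + 2"] md_lt[of "int i + 6"] unfolding blkT_def by auto
  then show ?thesis by auto
qed
lemma SS: "e < 7 \<Longrightarrow> (\<Sum>q\<in>{q\<in>PS. 2*v + e \<in> (\<lambda>(j,c). blkS j c) q}. (\<lambda>(j,c). wS j c) q) = (\<Sum>j<v. wS j e)"
proof -
  assume e: "e < 7"
  have "(\<Sum>q\<in>{q\<in>PS. 2*v + e \<in> (\<lambda>(j,c). blkS j c) q}. (\<lambda>(j,c). wS j c) q)
     = (\<Sum>e'\<in>{..<7}. \<Sum>j\<in>{..<v}. if 2*v + e \<in> blkS j e' then wS j e' else 0)"
    unfolding PS_def by (rule sum_prod_filter) auto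
  also have "\<dots> = (\<Sum>e'\<in>{..<7}. if e' = e then (\<Sum>j\<in>{..<v}. wS j e') else 0)"
  proof (intro sum.cong refl)
    fix e' :: nat assume e': "e' \<in> {..<7}"
    have "2*v + e \<in> blkS j e' \<longleftrightarrow> e' = e" if "j < v" for j
      using that md_lt[of "int j + int e' - 3"] unfolding blkS_def by auto
    then show "(\<Sum>j\<in>{..<v}. if 2*v + e \<in> blkS j e' then wS j e' else 0) =
        (if e' = e then (\<Sum>j\<in>{..<v}. wS j e') else 0)" by auto
  qed
  also have "\<dots> = (\<Sum>j<v. wS j e)" using e by (simp add: sum.delta)
  finally show ?thesis .
qed

end

context cons begin

lemma pp_add: "pp (a + b) = pp a * (-1)^b" unfolding pp_def by (simp add: power_add)
lemma pp_sub: "b \<le> a \<Longrightarrow> pp (a - b) = pp a * (-1)^b"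
proof -
  assume "b \<le> a"
  then have "pp a = pp (a - b) * (-1)^b" unfolding pp_def by (metis le_add_diff_inverse2 power_add)
  then show ?thesis by (simp add: mult.assoc power_mult_distrib[symmetric])
qed
lemma pp_Suc: "pp (Suc n) = - pp n" unfolding pp_def by simp
lemma pp_0: "pp 0 = 1" unfolding pp_def by simp
lemma pp_v: "pp v = -1" unfolding pp_def using v_odd by simp
lemma pp_vm: "m \<le> v \<Longrightarrow> pp (v - m) = - ((-1)^m)" using pp_sub[of m v] pp_v by simp

lemma md_vplus: "md (int v + c) = md c" by (rule mdc) simp
lemma md_vminus: "0 < c \<Longrightarrow> c \<le> int v \<Longrightarrow> md (int v - c) = v - nat c"
proof -
  assume "0 < c" "c \<le> int v"
  have "md (int v - c) = md (- c)" by (rule mdc) simp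
  then show ?thesis using md_negnum[of c] \<open>0 < c\<close> \<open>c \<le> int v\<close> by simp
qed

definition Ey :: "nat \<Rightarrow> int" where
  "Ey y = wM (md (int y + 4)) 4 + wM (md (int y - 4)) 4 + wM (md (int y + 5)) 5 + wM (md (int y - 5)) 5
    + wM (md (int y + 6)) 6 + wM (md (int y - 6)) 6 + wS (md (int y + 3)) 0 + wS (md (int y + 2)) 1
    + wS (md (int y + 1)) 2 + wS (md (int y)) 3 + wS (md (int y - 1)) 4 + wS (md (int y - 2)) 5
    + wS (md (int y - 3)) 6 + wT y + wT (md (int y - 2)) + wT (md (int y - 6))"

lemma Ey_mid: "6 \<le> y \<Longrightarrow> y + 10 \<le> v \<Longrightarrow> Ey y = 0"
proof -
  assume a: "6 \<le> y" "y + 10 \<le> v"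
  have m: "md (int y + c) = y + nat c" if "0 \<le> c" "c \<le> 6" for c
    using a that by (subst md_range) auto
  have m2: "md (int y - c) = y - nat c" if "0 \<le> c" "c \<le> 6" for c
    using a that by (subst md_range) auto
  have mm: "md (int y + 4) = y + 4" "md (int y + 5) = y + 5" "md (int y + 6) = y + 6"
     "md (int y + 3) = y + 3" "md (int y + 2) = y + 2" "md (int y + 1) = y + 1" "md (int y) = y"
    using m[of 4] m[of 5] m[of 6] m[of 3] m[of 2] m[of 1] m[of 0] by simp_all
  have mm2: "md (int y - 4) = y - 4" "md (int y - 5) = y - 5" "md (int y - 6) = y - 6"
     "md (int y - 3) = y - 3" "md (int y - 2) = y - 2" "md (int y - 1) = y - 1"
    using m2[of 4] m2[of 5] m2[of 6] m2[of 3] m2[of 2] m2[of 1] by simp_all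
  have nf: "y + 4 \<noteq> v - 1" "y + 4 \<noteq> v - 2" "y + 4 \<noteq> v - 3" "y - 4 \<noteq> v - 1" "y - 4 \<noteq> v - 2" "y - 4 \<noteq> v - 3" "y + 5 \<noteq> v - 1" "y + 5 \<noteq> v - 2" "y + 5 \<noteq> v - 3" "y - 5 \<noteq> v - 1" "y - 5 \<noteq> v - 2" "y - 5 \<noteq> v - 3" "y + 6 \<noteq> v - 1" "y + 6 \<noteq> v - 2" "y + 6 \<noteq> v - 3" "y - 6 \<noteq> v - 1" "y - 6 \<noteq> v - 2" "y - 6 \<noteq> v - 3" "y + 3 \<noteq> v - 1" "y + 3 \<noteq> v - 2" "y + 3 \<noteq> v - 3" "y + 2 \<noteq> v - 1" "y + 2 \<noteq> v - 2" "y + 2 \<noteq> v - 3" "y + 1 \<noteq> v - 1" "y + 1 \<noteq> v - 2" "y + 1 \<noteq> v - 3" "y \<noteq> v - 1" "y \<noteq> v - 2" "y \<noteq> v - 3" "y - 1 \<noteq> v - 1" "y - 1 \<noteq> v - 2" "y - 1 \<noteq> v - 3" "y - 2 \<noteq> v - 1" "y - 2 \<noteq> v - 2" "y - 2 \<noteq> v - 3" "y - 3 \<noteq> v - 1" "y - 3 \<noteq> v - 2" "y - 3 \<noteq> v - 3" using a by auto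
  show ?thesis unfolding Ey_def mm mm2 wM_def wS_def wT_def fS_def eps_def
    using a by (simp add: pp_add pp_sub pp_Suc nf[simplified])
qed

lemma pp_num: "pp (numeral n) = (-1)^numeral n" unfolding pp_def by simp
lemma pp_1: "pp 1 = -1" unfolding pp_def by simp


lemma Ey_low: "17 \<le> v \<Longrightarrow> y < 6 \<Longrightarrow> Ey y = 0"
proof -
  assume v17: "17 \<le> v" and "y < 6"
  then have "y = 0 \<or> y = 1 \<or> y = 2 \<or> y = 3 \<or> y = 4 \<or> y = 5" by auto
  moreover have nf: "v - 1 \<noteq> v - 2" "v - 1 \<noteq> v - 3" "v - 2 \<noteq> v - 1" "v - 2 \<noteq> v - 3" "v - 3 \<noteq> v - 1" "v - 3 \<noteq> v - 2" "v - 4 \<noteq> v - 1" "v - 4 \<noteq> v - 2" "v - 4 \<noteq> v - 3" "v - 5 \<noteq> v - 1" "v - 5 \<noteq> v - 2" "v - 5 \<noteq> v - 3" "v - 6 \<noteq> v - 1" "v - 6 \<noteq> v - 2" "v - 6 \<noteq> v - 3" "v - 7 \<noteq> v - 1" "v - 7 \<noteq> v - 2" "v - 7 \<noteq> v - 3" "v - 8 \<noteq> v - 1" "v - 8 \<noteq> v - 2" "v - 8 \<noteq> v - 3" "v - 9 \<noteq> v - 1" "v - 9 \<noteq> v - 2" "v - 9 \<noteq> v - 3" "0 \<noteq> v - 1" "1 \<noteq> v - 1" "2 \<noteq> v - 1" "3 \<noteq> v - 1" "4 \<noteq> v - 1" "5 \<noteq> v - 1" "6 \<noteq> v - 1" "7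 \<noteq> v - 1" "8 \<noteq> v - 1" "9 \<noteq> v - 1" "10 \<noteq> v - 1" "11 \<noteq> v - 1" "0 \<noteq> v - 2" "1 \<noteq> v - 2" "2 \<noteq> v - 2" "3 \<noteq> v - 2" "4 \<noteq> v - 2" "5 \<noteq> v - 2" "6 \<noteq> v - 2" "7 \<noteq> v - 2" "8 \<noteq> v - 2" "9 \<noteq> v - 2" "10 \<noteq> v - 2" "11 \<noteq> v - 2" "0 \<noteq> v - 3" "1 \<noteq> v - 3" "2 \<noteq> v - 3" "3 \<noteq> v - 3" "4 \<noteq> v - 3" "5 \<noteq> v - 3" "6 \<noteq> v - 3" "7 \<noteq> v - 3" "8 \<noteq> v - 3" "9 \<noteq> v - 3" "10 \<noteq> v - 3" "11 \<noteq> v - 3" "v - 1 \<noteq> 0" "v - 1 \<noteq> 1" "v - 1 \<noteq> 2" "v - 1 \<noteq> 3" "v - 1 \<noteq> 4" "v - 1 \<noteq> 5" "v - 1 \<noteq> 6" "v - 1 \<noteq> 7" "v - 1 \<noteq> 8" "v - 1 \<noteq> 9" "v - 1 \<noteq> 10" "v - 1 \<noteq> 11" "v - 2 \<noteq> 0" "v - 2 \<noteq> 1" "v - 2 \<noteq> 2" "v - 2 \<noteq> 3" "v - 2 \<noteq> 4" "v - 2 \<noteq> 5" "v - 2 \<noteq> 6" "v - 2 \<noteq> 7" "v - 2 \<noteq> 8" "v - 2 \<noteq> 9" "v - 2 \<noteq> 10" "v - 2 \<noteq> 11" "v - 3 \<noteq> 0" "v - 3 \<noteq> 1" "v - 3 \<noteq>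 2" "v - 3 \<noteq> 3" "v - 3 \<noteq> 4" "v - 3 \<noteq> 5" "v - 3 \<noteq> 6" "v - 3 \<noteq> 7" "v - 3 \<noteq> 8" "v - 3 \<noteq> 9" "v - 3 \<noteq> 10" "v - 3 \<noteq> 11" using v17 by auto
  ultimately show ?thesis using v13
    by (elim disjE) (simp_all add: Ey_def wM_def wS_def wT_def fS_def eps_def md_num md_negnum pp_vm pp_num pp_0 pp_1 pp_Suc nf[simplified])
qed



lemma md_vplus2: "md (c + int v) = md c" by (rule mdc) simp
lemma nat_vm: "0 \<le> c \<Longrightarrow> nat (int v - c) = v - nat c" by simp
lemma md_v0: "md (int v) = 0" using md_vplus[of 0] md_num[of 0] vpos by simp
lemma Ey_high1: "17 \<le> v \<Longrightarrow> Ey (v - 1) = 0"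
proof -
  assume v17: "17 \<le> v"
  have nf: "v - 1 \<noteq> v - 2" "v - 1 \<noteq> v - 3" "v - 2 \<noteq> v - 1" "v - 2 \<noteq> v - 3" "v - 3 \<noteq> v - 1" "v - 3 \<noteq> v - 2" "v - 4 \<noteq> v - 1" "v - 4 \<noteq> v - 2" "v - 4 \<noteq> v - 3" "v - 5 \<noteq> v - 1" "v - 5 \<noteq> v - 2" "v - 5 \<noteq> v - 3" "v - 6 \<noteq> v - 1" "v - 6 \<noteq> v - 2" "v - 6 \<noteq> v - 3" "v - 7 \<noteq> v - 1" "v - 7 \<noteq> v - 2" "v - 7 \<noteq> v - 3" "v - 8 \<noteq> v - 1" "v - 8 \<noteq> v - 2" "v - 8 \<noteq> v - 3" "v - 9 \<noteq> v - 1" "v - 9 \<noteq> v - 2" "v - 9 \<noteq> v - 3" "v - 10 \<noteq> v - 1" "v - 10 \<noteq> v - 2" "v - 10 \<noteq> v - 3" "v - 11 \<noteq> v - 1" "v - 11 \<noteq> v - 2" "v - 11 \<noteq> v - 3" "v - 12 \<noteq> v - 1" "v - 12 \<noteq> v - 2" "v - 12 \<noteq> v - 3" "v - 13 \<noteq> v - 1" "v - 13 \<noteq> v - 2" "v - 13 \<noteq> v - 3" "v - 14 \<noteq> v - 1" "v - 14 \<noteq> v - 2" "v - 14 \<noteq> v - 3" "v - 15 \<noteq> v - 1" "v - 15 \<noteq> v - 2" "v - 15 \<noteq> v - 3" "0 \<noteq> v - 1" "1 \<noteq> v - 1" "2 \<noteq> v - 1" "3 \<noteq> v - 1" "4 \<noteq>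 v - 1" "5 \<noteq> v - 1" "6 \<noteq> v - 1" "7 \<noteq> v - 1" "8 \<noteq> v - 1" "9 \<noteq> v - 1" "10 \<noteq> v - 1" "11 \<noteq> v - 1" "0 \<noteq> v - 2" "1 \<noteq> v - 2" "2 \<noteq> v - 2" "3 \<noteq> v - 2" "4 \<noteq> v - 2" "5 \<noteq> v - 2" "6 \<noteq> v - 2" "7 \<noteq> v - 2" "8 \<noteq> v - 2" "9 \<noteq> v - 2" "10 \<noteq> v - 2" "11 \<noteq> v - 2" "0 \<noteq> v - 3" "1 \<noteq> v - 3" "2 \<noteq> v - 3" "3 \<noteq> v - 3" "4 \<noteq> v - 3" "5 \<noteq> v - 3" "6 \<noteq> v - 3" "7 \<noteq> v - 3" "8 \<noteq> v - 3" "9 \<noteq> v - 3" "10 \<noteq> v - 3" "11 \<noteq> v - 3" "v - 1 \<noteq> 0" "v - 1 \<noteq> 1" "v - 1 \<noteq> 2" "v - 1 \<noteq> 3" "v - 1 \<noteq> 4" "v - 1 \<noteq> 5" "v - 1 \<noteq> 6" "v - 1 \<noteq> 7" "v - 1 \<noteq> 8" "v - 1 \<noteq> 9" "v - 1 \<noteq> 10" "v - 1 \<noteq> 11" "v - 2 \<noteq> 0" "v - 2 \<noteq> 1" "v - 2 \<noteq> 2" "v - 2 \<noteq> 3" "v - 2 \<noteq> 4" "v - 2 \<noteq> 5" "v - 2 \<noteq> 6" "v - 2 \<noteq> 7" "v - 2 \<noteq> 8" "v - 2 \<noteq> 9" "v - 2 \<noteq> 10" "v - 2 \<noteq> 11"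 "v - 3 \<noteq> 0" "v - 3 \<noteq> 1" "v - 3 \<noteq> 2" "v - 3 \<noteq> 3" "v - 3 \<noteq> 4" "v - 3 \<noteq> 5" "v - 3 \<noteq> 6" "v - 3 \<noteq> 7" "v - 3 \<noteq> 8" "v - 3 \<noteq> 9" "v - 3 \<noteq> 10" "v - 3 \<noteq> 11" using v17 by auto
  show ?thesis using v13 v17
    by (simp add: Ey_def wM_def wS_def wT_def fS_def eps_def md_vminus md_vplus2 md_v0 md_num nat_vm pp_vm pp_num pp_0 pp_1 pp_Suc nf[simplified])
qed

lemma Ey_high2: "17 \<le> v \<Longrightarrow> Ey (v - 2) = 0"
proof -
  assume v17: "17 \<le> v"
  have nf: "v - 1 \<noteq> v - 2" "v - 1 \<noteq> v - 3" "v - 2 \<noteq> v - 1" "v - 2 \<noteq> v - 3" "v - 3 \<noteq> v - 1" "v - 3 \<noteq> v - 2" "v - 4 \<noteq> v - 1" "v - 4 \<noteq> v - 2" "v - 4 \<noteq> v - 3" "v - 5 \<noteq> v - 1" "v - 5 \<noteq> v - 2" "v - 5 \<noteq> v - 3" "v - 6 \<noteq> v - 1" "v - 6 \<noteq> v - 2" "v - 6 \<noteq> v - 3" "v - 7 \<noteq> v - 1" "v - 7 \<noteq> v - 2" "v - 7 \<noteq> v - 3" "v - 8 \<noteq> v - 1" "v - 8 \<noteq> v - 2" "v - 8 \<noteq> v - 3" "v - 9 \<noteq> v - 1" "v - 9 \<noteq> v - 2" "v - 9 \<noteq> v - 3" "v - 10 \<noteq> v - 1" "v - 10 \<noteq>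 v - 2" "v - 10 \<noteq> v - 3" "v - 11 \<noteq> v - 1" "v - 11 \<noteq> v - 2" "v - 11 \<noteq> v - 3" "v - 12 \<noteq> v - 1" "v - 12 \<noteq> v - 2" "v - 12 \<noteq> v - 3" "v - 13 \<noteq> v - 1" "v - 13 \<noteq> v - 2" "v - 13 \<noteq> v - 3" "v - 14 \<noteq> v - 1" "v - 14 \<noteq> v - 2" "v - 14 \<noteq> v - 3" "v - 15 \<noteq> v - 1" "v - 15 \<noteq> v - 2" "v - 15 \<noteq> v - 3" "0 \<noteq> v - 1" "1 \<noteq> v - 1" "2 \<noteq> v - 1" "3 \<noteq> v - 1" "4 \<noteq> v - 1" "5 \<noteq> v - 1" "6 \<noteq> v - 1" "7 \<noteq> v - 1" "8 \<noteq> v - 1" "9 \<noteq> v - 1" "10 \<noteq> v - 1" "11 \<noteq> v - 1" "0 \<noteq> v - 2" "1 \<noteq> v - 2" "2 \<noteq> v - 2" "3 \<noteq> v - 2" "4 \<noteq> v - 2" "5 \<noteq> v - 2" "6 \<noteq> v - 2" "7 \<noteq> v - 2" "8 \<noteq> v - 2" "9 \<noteq> v - 2" "10 \<noteq> v - 2" "11 \<noteq> v - 2" "0 \<noteq> v - 3" "1 \<noteq> v - 3" "2 \<noteq> v - 3" "3 \<noteq> v - 3" "4 \<noteq> v - 3" "5 \<noteq> v - 3" "6 \<noteq> v - 3" "7 \<noteq> v - 3" "8 \<noteq> v - 3" "9 \<noteq> v - 3" "10 \<noteq> v - 3" "11 \<noteq> v - 3" "v - 1 \<noteq> 0" "v -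 1 \<noteq> 1" "v - 1 \<noteq> 2" "v - 1 \<noteq> 3" "v - 1 \<noteq> 4" "v - 1 \<noteq> 5" "v - 1 \<noteq> 6" "v - 1 \<noteq> 7" "v - 1 \<noteq> 8" "v - 1 \<noteq> 9" "v - 1 \<noteq> 10" "v - 1 \<noteq> 11" "v - 2 \<noteq> 0" "v - 2 \<noteq> 1" "v - 2 \<noteq> 2" "v - 2 \<noteq> 3" "v - 2 \<noteq> 4" "v - 2 \<noteq> 5" "v - 2 \<noteq> 6" "v - 2 \<noteq> 7" "v - 2 \<noteq> 8" "v - 2 \<noteq> 9" "v - 2 \<noteq> 10" "v - 2 \<noteq> 11" "v - 3 \<noteq> 0" "v - 3 \<noteq> 1" "v - 3 \<noteq> 2" "v - 3 \<noteq> 3" "v - 3 \<noteq> 4" "v - 3 \<noteq> 5" "v - 3 \<noteq> 6" "v - 3 \<noteq> 7" "v - 3 \<noteq> 8" "v - 3 \<noteq> 9" "v - 3 \<noteq> 10" "v - 3 \<noteq> 11" using v17 by auto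
  show ?thesis using v13 v17
    by (simp add: Ey_def wM_def wS_def wT_def fS_def eps_def md_vminus md_vplus2 md_v0 md_num nat_vm pp_vm pp_num pp_0 pp_1 pp_Suc nf[simplified])
qed

lemma Ey_high3: "17 \<le> v \<Longrightarrow> Ey (v - 3) = 0"
proof -
  assume v17: "17 \<le> v"
  have nf: "v - 1 \<noteq> v - 2" "v - 1 \<noteq> v - 3" "v - 2 \<noteq> v - 1" "v - 2 \<noteq> v - 3" "v - 3 \<noteq> v - 1" "v - 3 \<noteq> v - 2" "v - 4 \<noteq> v - 1" "v - 4 \<noteq> v - 2" "v - 4 \<noteq> v - 3" "v - 5 \<noteq> v - 1" "v - 5 \<noteq> v - 2" "v - 5 \<noteq> v - 3" "v - 6 \<noteq> v - 1" "v - 6 \<noteq> v - 2" "v - 6 \<noteq> v - 3" "v - 7 \<noteq> v - 1" "v - 7 \<noteq> v - 2" "v - 7 \<noteq> v - 3" "v - 8 \<noteq> v - 1" "v - 8 \<noteq> v - 2" "v - 8 \<noteq> v - 3" "v - 9 \<noteq> v - 1" "v - 9 \<noteq> v - 2" "v - 9 \<noteq> v - 3" "v - 10 \<noteq> v - 1" "v - 10 \<noteq> v - 2" "v - 10 \<noteq> v - 3" "v - 11 \<noteq> v - 1" "v - 11 \<noteq> v - 2" "v - 11 \<noteq> v - 3" "v - 12 \<noteq> v - 1" "v - 12 \<noteq> v - 2" "v - 12 \<noteq> v - 3" "v - 13 \<noteq> v - 1" "v - 13 \<noteq> v - 2" "v - 13 \<noteq> v - 3" "v - 14 \<noteq> v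 - 1" "v - 14 \<noteq> v - 2" "v - 14 \<noteq> v - 3" "v - 15 \<noteq> v - 1" "v - 15 \<noteq> v - 2" "v - 15 \<noteq> v - 3" "0 \<noteq> v - 1" "1 \<noteq> v - 1" "2 \<noteq> v - 1" "3 \<noteq> v - 1" "4 \<noteq> v - 1" "5 \<noteq> v - 1" "6 \<noteq> v - 1" "7 \<noteq> v - 1" "8 \<noteq> v - 1" "9 \<noteq> v - 1" "10 \<noteq> v - 1" "11 \<noteq> v - 1" "0 \<noteq> v - 2" "1 \<noteq> v - 2" "2 \<noteq> v - 2" "3 \<noteq> v - 2" "4 \<noteq> v - 2" "5 \<noteq> v - 2" "6 \<noteq> v - 2" "7 \<noteq> v - 2" "8 \<noteq> v - 2" "9 \<noteq> v - 2" "10 \<noteq> v - 2" "11 \<noteq> v - 2" "0 \<noteq> v - 3" "1 \<noteq> v - 3" "2 \<noteq> v - 3" "3 \<noteq> v - 3" "4 \<noteq> v - 3" "5 \<noteq> v - 3" "6 \<noteq> v - 3" "7 \<noteq> v - 3" "8 \<noteq> v - 3" "9 \<noteq> v - 3" "10 \<noteq> v - 3" "11 \<noteq> v - 3" "v - 1 \<noteq> 0" "v - 1 \<noteq> 1" "v - 1 \<noteq> 2" "v - 1 \<noteq> 3" "v - 1 \<noteq> 4" "v - 1 \<noteq> 5" "v - 1 \<noteq> 6" "v - 1 \<noteq> 7" "v - 1 \<noteq> 8" "v - 1 \<noteq> 9" "v - 1 \<noteq> 10" "v - 1 \<noteq> 11" "v - 2 \<noteq> 0" "v - 2 \<noteq>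 1" "v - 2 \<noteq> 2" "v - 2 \<noteq> 3" "v - 2 \<noteq> 4" "v - 2 \<noteq> 5" "v - 2 \<noteq> 6" "v - 2 \<noteq> 7" "v - 2 \<noteq> 8" "v - 2 \<noteq> 9" "v - 2 \<noteq> 10" "v - 2 \<noteq> 11" "v - 3 \<noteq> 0" "v - 3 \<noteq> 1" "v - 3 \<noteq> 2" "v - 3 \<noteq> 3" "v - 3 \<noteq> 4" "v - 3 \<noteq> 5" "v - 3 \<noteq> 6" "v - 3 \<noteq> 7" "v - 3 \<noteq> 8" "v - 3 \<noteq> 9" "v - 3 \<noteq> 10" "v - 3 \<noteq> 11" using v17 by auto
  show ?thesis using v13 v17
    by (simp add: Ey_def wM_def wS_def wT_def fS_def eps_def md_vminus md_vplus2 md_v0 md_num nat_vm pp_vm pp_num pp_0 pp_1 pp_Suc nf[simplified])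
qed

lemma Ey_high4: "17 \<le> v \<Longrightarrow> Ey (v - 4) = 0"
proof -
  assume v17: "17 \<le> v"
  have nf: "v - 1 \<noteq> v - 2" "v - 1 \<noteq> v - 3" "v - 2 \<noteq> v - 1" "v - 2 \<noteq> v - 3" "v - 3 \<noteq> v - 1" "v - 3 \<noteq> v - 2" "v - 4 \<noteq> v - 1" "v - 4 \<noteq> v - 2" "v - 4 \<noteq> v - 3" "v - 5 \<noteq> v - 1" "v - 5 \<noteq> v - 2" "v - 5 \<noteq> v - 3" "v - 6 \<noteq> v - 1" "v - 6 \<noteq> v - 2" "v - 6 \<noteq> v - 3" "v - 7 \<noteq> v - 1" "v - 7 \<noteq> v - 2" "v - 7 \<noteq> v - 3" "v - 8 \<noteq> v - 1" "v - 8 \<noteq> v - 2" "v - 8 \<noteq> v - 3" "v - 9 \<noteq> v - 1" "v - 9 \<noteq> v - 2" "v - 9 \<noteq> v - 3" "v - 10 \<noteq> v - 1" "v - 10 \<noteq> v - 2" "v - 10 \<noteq> v - 3" "v - 11 \<noteq> v - 1" "v - 11 \<noteq> v - 2" "v - 11 \<noteq> v - 3" "v - 12 \<noteq> v - 1" "v - 12 \<noteq> v - 2" "v - 12 \<noteq> v - 3" "v - 13 \<noteq> v - 1" "v - 13 \<noteq> v - 2" "v - 13 \<noteq> v - 3" "v - 14 \<noteq> v - 1" "v - 14 \<noteq> v - 2" "v - 14 \<noteq> v - 3" "v - 15 \<noteq> v - 1" "v - 15 \<noteq> v - 2" "v - 15 \<noteq> v - 3" "0 \<noteq> v - 1" "1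 \<noteq> v - 1" "2 \<noteq> v - 1" "3 \<noteq> v - 1" "4 \<noteq> v - 1" "5 \<noteq> v - 1" "6 \<noteq> v - 1" "7 \<noteq> v - 1" "8 \<noteq> v - 1" "9 \<noteq> v - 1" "10 \<noteq> v - 1" "11 \<noteq> v - 1" "0 \<noteq> v - 2" "1 \<noteq> v - 2" "2 \<noteq> v - 2" "3 \<noteq> v - 2" "4 \<noteq> v - 2" "5 \<noteq> v - 2" "6 \<noteq> v - 2" "7 \<noteq> v - 2" "8 \<noteq> v - 2" "9 \<noteq> v - 2" "10 \<noteq> v - 2" "11 \<noteq> v - 2" "0 \<noteq> v - 3" "1 \<noteq> v - 3" "2 \<noteq> v - 3" "3 \<noteq> v - 3" "4 \<noteq> v - 3" "5 \<noteq> v - 3" "6 \<noteq> v - 3" "7 \<noteq> v - 3" "8 \<noteq> v - 3" "9 \<noteq> v - 3" "10 \<noteq> v - 3" "11 \<noteq> v - 3" "v - 1 \<noteq> 0" "v - 1 \<noteq> 1" "v - 1 \<noteq> 2" "v - 1 \<noteq> 3" "v - 1 \<noteq> 4" "v - 1 \<noteq> 5" "v - 1 \<noteq> 6" "v - 1 \<noteq> 7" "v - 1 \<noteq> 8" "v - 1 \<noteq> 9" "v - 1 \<noteq> 10" "v - 1 \<noteq> 11" "v - 2 \<noteq> 0" "v - 2 \<noteq> 1" "v - 2 \<noteq> 2" "v - 2 \<noteq> 3" "v - 2 \<noteq> 4" "v - 2 \<noteq> 5" "v - 2 \<noteq> 6" "v - 2 \<noteq> 7" "v - 2 \<noteq>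 8" "v - 2 \<noteq> 9" "v - 2 \<noteq> 10" "v - 2 \<noteq> 11" "v - 3 \<noteq> 0" "v - 3 \<noteq> 1" "v - 3 \<noteq> 2" "v - 3 \<noteq> 3" "v - 3 \<noteq> 4" "v - 3 \<noteq> 5" "v - 3 \<noteq> 6" "v - 3 \<noteq> 7" "v - 3 \<noteq> 8" "v - 3 \<noteq> 9" "v - 3 \<noteq> 10" "v - 3 \<noteq> 11" using v17 by auto
  show ?thesis using v13 v17
    by (simp add: Ey_def wM_def wS_def wT_def fS_def eps_def md_vminus md_vplus2 md_v0 md_num nat_vm pp_vm pp_num pp_0 pp_1 pp_Suc nf[simplified])
qed

lemma Ey_high5: "17 \<le> v \<Longrightarrow> Ey (v - 5) = 0"
proof -
  assume v17: "17 \<le> v"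
  have nf: "v - 1 \<noteq> v - 2" "v - 1 \<noteq> v - 3" "v - 2 \<noteq> v - 1" "v - 2 \<noteq> v - 3" "v - 3 \<noteq> v - 1" "v - 3 \<noteq> v - 2" "v - 4 \<noteq> v - 1" "v - 4 \<noteq> v - 2" "v - 4 \<noteq> v - 3" "v - 5 \<noteq> v - 1" "v - 5 \<noteq> v - 2" "v - 5 \<noteq> v - 3" "v - 6 \<noteq> v - 1" "v - 6 \<noteq> v - 2" "v - 6 \<noteq> v - 3" "v - 7 \<noteq> v - 1" "v - 7 \<noteq> v - 2" "v - 7 \<noteq> v - 3" "v - 8 \<noteq> v - 1" "v - 8 \<noteq> v - 2" "v - 8 \<noteq> v - 3" "v - 9 \<noteq> v - 1" "v - 9 \<noteq> v - 2" "v - 9 \<noteq> v - 3" "v - 10 \<noteq> v - 1" "v - 10 \<noteq> v - 2" "v - 10 \<noteq> v - 3" "v - 11 \<noteq> v - 1" "v - 11 \<noteq> v - 2" "v - 11 \<noteq> v - 3" "v - 12 \<noteq> v - 1" "v - 12 \<noteq> v - 2" "v - 12 \<noteq> v - 3" "v - 13 \<noteq> v - 1" "v - 13 \<noteq> v - 2" "v - 13 \<noteq> v - 3" "v - 14 \<noteq> v - 1" "v - 14 \<noteq> v - 2" "v - 14 \<noteq> v - 3" "v - 15 \<noteq> v - 1" "v - 15 \<noteq> v - 2" "v - 15 \<noteq> v - 3" "0 \<noteq> v - 1" "1 \<noteq> v - 1" "2 \<noteq> v - 1" "3 \<noteq> v - 1" "4 \<noteq> v - 1" "5 \<noteq> v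 - 1" "6 \<noteq> v - 1" "7 \<noteq> v - 1" "8 \<noteq> v - 1" "9 \<noteq> v - 1" "10 \<noteq> v - 1" "11 \<noteq> v - 1" "0 \<noteq> v - 2" "1 \<noteq> v - 2" "2 \<noteq> v - 2" "3 \<noteq> v - 2" "4 \<noteq> v - 2" "5 \<noteq> v - 2" "6 \<noteq> v - 2" "7 \<noteq> v - 2" "8 \<noteq> v - 2" "9 \<noteq> v - 2" "10 \<noteq> v - 2" "11 \<noteq> v - 2" "0 \<noteq> v - 3" "1 \<noteq> v - 3" "2 \<noteq> v - 3" "3 \<noteq> v - 3" "4 \<noteq> v - 3" "5 \<noteq> v - 3" "6 \<noteq> v - 3" "7 \<noteq> v - 3" "8 \<noteq> v - 3" "9 \<noteq> v - 3" "10 \<noteq> v - 3" "11 \<noteq> v - 3" "v - 1 \<noteq> 0" "v - 1 \<noteq> 1" "v - 1 \<noteq> 2" "v - 1 \<noteq> 3" "v - 1 \<noteq> 4" "v - 1 \<noteq> 5" "v - 1 \<noteq> 6" "v - 1 \<noteq> 7" "v - 1 \<noteq> 8" "v - 1 \<noteq> 9" "v - 1 \<noteq> 10" "v - 1 \<noteq> 11" "v - 2 \<noteq> 0" "v - 2 \<noteq> 1" "v - 2 \<noteq> 2" "v - 2 \<noteq> 3" "v - 2 \<noteq> 4" "v - 2 \<noteq> 5" "v - 2 \<noteq> 6" "v - 2 \<noteq> 7" "v - 2 \<noteq> 8" "v - 2 \<noteq> 9" "v - 2 \<noteq> 10" "v - 2 \<noteq> 11" "v - 3 \<noteq> 0"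 "v - 3 \<noteq> 1" "v - 3 \<noteq> 2" "v - 3 \<noteq> 3" "v - 3 \<noteq> 4" "v - 3 \<noteq> 5" "v - 3 \<noteq> 6" "v - 3 \<noteq> 7" "v - 3 \<noteq> 8" "v - 3 \<noteq> 9" "v - 3 \<noteq> 10" "v - 3 \<noteq> 11" using v17 by auto
  show ?thesis using v13 v17
    by (simp add: Ey_def wM_def wS_def wT_def fS_def eps_def md_vminus md_vplus2 md_v0 md_num nat_vm pp_vm pp_num pp_0 pp_1 pp_Suc nf[simplified])
qed

lemma Ey_high6: "17 \<le> v \<Longrightarrow> Ey (v - 6) = 0"
proof -
  assume v17: "17 \<le> v"
  have nf: "v - 1 \<noteq> v - 2" "v - 1 \<noteq> v - 3" "v - 2 \<noteq> v - 1" "v - 2 \<noteq> v - 3" "v - 3 \<noteq> v - 1" "v - 3 \<noteq> v - 2" "v - 4 \<noteq> v - 1" "v - 4 \<noteq> v - 2" "v - 4 \<noteq> v - 3" "v - 5 \<noteq> v - 1" "v - 5 \<noteq> v - 2" "v - 5 \<noteq> v - 3" "v - 6 \<noteq> v - 1" "v - 6 \<noteq> v - 2" "v - 6 \<noteq> v - 3" "v - 7 \<noteq> v - 1" "v - 7 \<noteq> v - 2" "v - 7 \<noteq> v - 3" "v - 8 \<noteq> v - 1" "v - 8 \<noteq> v - 2" "v - 8 \<noteq> v - 3" "v - 9 \<noteq> v - 1" "v - 9 \<noteq> v - 2" "v - 9 \<noteq> v - 3" "v - 10 \<noteq> v - 1" "v - 10 \<noteq> v - 2" "v - 10 \<noteq>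 v - 3" "v - 11 \<noteq> v - 1" "v - 11 \<noteq> v - 2" "v - 11 \<noteq> v - 3" "v - 12 \<noteq> v - 1" "v - 12 \<noteq> v - 2" "v - 12 \<noteq> v - 3" "v - 13 \<noteq> v - 1" "v - 13 \<noteq> v - 2" "v - 13 \<noteq> v - 3" "v - 14 \<noteq> v - 1" "v - 14 \<noteq> v - 2" "v - 14 \<noteq> v - 3" "v - 15 \<noteq> v - 1" "v - 15 \<noteq> v - 2" "v - 15 \<noteq> v - 3" "0 \<noteq> v - 1" "1 \<noteq> v - 1" "2 \<noteq> v - 1" "3 \<noteq> v - 1" "4 \<noteq> v - 1" "5 \<noteq> v - 1" "6 \<noteq> v - 1" "7 \<noteq> v - 1" "8 \<noteq> v - 1" "9 \<noteq> v - 1" "10 \<noteq> v - 1" "11 \<noteq> v - 1" "0 \<noteq> v - 2" "1 \<noteq> v - 2" "2 \<noteq> v - 2" "3 \<noteq> v - 2" "4 \<noteq> v - 2" "5 \<noteq> v - 2" "6 \<noteq> v - 2" "7 \<noteq> v - 2" "8 \<noteq> v - 2" "9 \<noteq> v - 2" "10 \<noteq> v - 2" "11 \<noteq> v - 2" "0 \<noteq> v - 3" "1 \<noteq> v - 3" "2 \<noteq> v - 3" "3 \<noteq> v - 3" "4 \<noteq> v - 3" "5 \<noteq> v - 3" "6 \<noteq> v - 3" "7 \<noteq> v - 3" "8 \<noteq> v - 3" "9 \<noteq> v - 3" "10 \<noteq> v - 3" "11 \<noteq> v - 3" "v - 1 \<noteq> 0" "v - 1 \<noteq> 1" "v - 1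 \<noteq> 2" "v - 1 \<noteq> 3" "v - 1 \<noteq> 4" "v - 1 \<noteq> 5" "v - 1 \<noteq> 6" "v - 1 \<noteq> 7" "v - 1 \<noteq> 8" "v - 1 \<noteq> 9" "v - 1 \<noteq> 10" "v - 1 \<noteq> 11" "v - 2 \<noteq> 0" "v - 2 \<noteq> 1" "v - 2 \<noteq> 2" "v - 2 \<noteq> 3" "v - 2 \<noteq> 4" "v - 2 \<noteq> 5" "v - 2 \<noteq> 6" "v - 2 \<noteq> 7" "v - 2 \<noteq> 8" "v - 2 \<noteq> 9" "v - 2 \<noteq> 10" "v - 2 \<noteq> 11" "v - 3 \<noteq> 0" "v - 3 \<noteq> 1" "v - 3 \<noteq> 2" "v - 3 \<noteq> 3" "v - 3 \<noteq> 4" "v - 3 \<noteq> 5" "v - 3 \<noteq> 6" "v - 3 \<noteq> 7" "v - 3 \<noteq> 8" "v - 3 \<noteq> 9" "v - 3 \<noteq> 10" "v - 3 \<noteq> 11" using v17 by auto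
  show ?thesis using v13 v17
    by (simp add: Ey_def wM_def wS_def wT_def fS_def eps_def md_vminus md_vplus2 md_v0 md_num nat_vm pp_vm pp_num pp_0 pp_1 pp_Suc nf[simplified])
qed

lemma Ey_high7: "17 \<le> v \<Longrightarrow> Ey (v - 7) = 0"
proof -
  assume v17: "17 \<le> v"
  have nf: "v - 1 \<noteq> v - 2" "v - 1 \<noteq> v - 3" "v - 2 \<noteq> v - 1" "v - 2 \<noteq> v - 3" "v - 3 \<noteq> v - 1" "v - 3 \<noteq> v - 2" "v - 4 \<noteq> v - 1" "v - 4 \<noteq> v - 2" "v - 4 \<noteq> v - 3" "v - 5 \<noteq> v - 1" "v - 5 \<noteq> v - 2" "v - 5 \<noteq> v - 3" "v - 6 \<noteq> v - 1" "v - 6 \<noteq> v - 2" "v - 6 \<noteq> v - 3" "v - 7 \<noteq> v - 1" "v - 7 \<noteq> v - 2" "v - 7 \<noteq> v - 3" "v - 8 \<noteq> v - 1" "v - 8 \<noteq> v - 2" "v - 8 \<noteq> v - 3" "v - 9 \<noteq> v - 1" "v - 9 \<noteq> v - 2" "v - 9 \<noteq> v - 3" "v - 10 \<noteq> v - 1" "v - 10 \<noteq> v - 2" "v - 10 \<noteq> v - 3" "v - 11 \<noteq> v - 1" "v - 11 \<noteq> v - 2" "v - 11 \<noteq> v - 3" "v - 12 \<noteq> v - 1" "v - 12 \<noteq> v - 2" "v - 12 \<noteq> v - 3" "v - 13 \<noteq> v - 1" "v - 13 \<noteq> v - 2" "v - 13 \<noteq> v - 3" "v - 14 \<noteq> v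 - 1" "v - 14 \<noteq> v - 2" "v - 14 \<noteq> v - 3" "v - 15 \<noteq> v - 1" "v - 15 \<noteq> v - 2" "v - 15 \<noteq> v - 3" "0 \<noteq> v - 1" "1 \<noteq> v - 1" "2 \<noteq> v - 1" "3 \<noteq> v - 1" "4 \<noteq> v - 1" "5 \<noteq> v - 1" "6 \<noteq> v - 1" "7 \<noteq> v - 1" "8 \<noteq> v - 1" "9 \<noteq> v - 1" "10 \<noteq> v - 1" "11 \<noteq> v - 1" "0 \<noteq> v - 2" "1 \<noteq> v - 2" "2 \<noteq> v - 2" "3 \<noteq> v - 2" "4 \<noteq> v - 2" "5 \<noteq> v - 2" "6 \<noteq> v - 2" "7 \<noteq> v - 2" "8 \<noteq> v - 2" "9 \<noteq> v - 2" "10 \<noteq> v - 2" "11 \<noteq> v - 2" "0 \<noteq> v - 3" "1 \<noteq> v - 3" "2 \<noteq> v - 3" "3 \<noteq> v - 3" "4 \<noteq> v - 3" "5 \<noteq> v - 3" "6 \<noteq> v - 3" "7 \<noteq> v - 3" "8 \<noteq> v - 3" "9 \<noteq> v - 3" "10 \<noteq> v - 3" "11 \<noteq> v - 3" "v - 1 \<noteq> 0" "v - 1 \<noteq> 1" "v - 1 \<noteq> 2" "v - 1 \<noteq> 3" "v - 1 \<noteq> 4" "v - 1 \<noteq> 5" "v - 1 \<noteq> 6" "v - 1 \<noteq> 7" "v - 1 \<noteq> 8" "v - 1 \<noteq> 9" "v - 1 \<noteq> 10" "v - 1 \<noteq> 11" "v - 2 \<noteq> 0" "v - 2 \<noteq>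 1" "v - 2 \<noteq> 2" "v - 2 \<noteq> 3" "v - 2 \<noteq> 4" "v - 2 \<noteq> 5" "v - 2 \<noteq> 6" "v - 2 \<noteq> 7" "v - 2 \<noteq> 8" "v - 2 \<noteq> 9" "v - 2 \<noteq> 10" "v - 2 \<noteq> 11" "v - 3 \<noteq> 0" "v - 3 \<noteq> 1" "v - 3 \<noteq> 2" "v - 3 \<noteq> 3" "v - 3 \<noteq> 4" "v - 3 \<noteq> 5" "v - 3 \<noteq> 6" "v - 3 \<noteq> 7" "v - 3 \<noteq> 8" "v - 3 \<noteq> 9" "v - 3 \<noteq> 10" "v - 3 \<noteq> 11" using v17 by auto
  show ?thesis using v13 v17
    by (simp add: Ey_def wM_def wS_def wT_def fS_def eps_def md_vminus md_vplus2 md_v0 md_num nat_vm pp_vm pp_num pp_0 pp_1 pp_Suc nf[simplified])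
qed

lemma Ey_high8: "17 \<le> v \<Longrightarrow> Ey (v - 8) = 0"
proof -
  assume v17: "17 \<le> v"
  have nf: "v - 1 \<noteq> v - 2" "v - 1 \<noteq> v - 3" "v - 2 \<noteq> v - 1" "v - 2 \<noteq> v - 3" "v - 3 \<noteq> v - 1" "v - 3 \<noteq> v - 2" "v - 4 \<noteq> v - 1" "v - 4 \<noteq> v - 2" "v - 4 \<noteq> v - 3" "v - 5 \<noteq> v - 1" "v - 5 \<noteq> v - 2" "v - 5 \<noteq> v - 3" "v - 6 \<noteq> v - 1" "v - 6 \<noteq> v - 2" "v - 6 \<noteq> v - 3" "v - 7 \<noteq> v - 1" "v - 7 \<noteq> v - 2" "v - 7 \<noteq> v - 3" "v - 8 \<noteq> v - 1" "v - 8 \<noteq> v - 2" "v - 8 \<noteq> v - 3" "v - 9 \<noteq> v - 1" "v - 9 \<noteq> v - 2" "v - 9 \<noteq> v - 3" "v - 10 \<noteq> v - 1" "v - 10 \<noteq> v - 2" "v - 10 \<noteq> v - 3" "v - 11 \<noteq> v - 1" "v - 11 \<noteq> v - 2" "v - 11 \<noteq> v - 3" "v - 12 \<noteq> v - 1" "v - 12 \<noteq> v - 2" "v - 12 \<noteq> v - 3" "v - 13 \<noteq> v - 1" "v - 13 \<noteq> v - 2" "v - 13 \<noteq> v - 3" "v - 14 \<noteq> v - 1" "v - 14 \<noteq> v - 2" "v - 14 \<noteq> v - 3" "v - 15 \<noteq> v - 1" "v - 15 \<noteq> v - 2" "v - 15 \<noteq> v - 3" "0 \<noteq> v - 1" "1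 \<noteq> v - 1" "2 \<noteq> v - 1" "3 \<noteq> v - 1" "4 \<noteq> v - 1" "5 \<noteq> v - 1" "6 \<noteq> v - 1" "7 \<noteq> v - 1" "8 \<noteq> v - 1" "9 \<noteq> v - 1" "10 \<noteq> v - 1" "11 \<noteq> v - 1" "0 \<noteq> v - 2" "1 \<noteq> v - 2" "2 \<noteq> v - 2" "3 \<noteq> v - 2" "4 \<noteq> v - 2" "5 \<noteq> v - 2" "6 \<noteq> v - 2" "7 \<noteq> v - 2" "8 \<noteq> v - 2" "9 \<noteq> v - 2" "10 \<noteq> v - 2" "11 \<noteq> v - 2" "0 \<noteq> v - 3" "1 \<noteq> v - 3" "2 \<noteq> v - 3" "3 \<noteq> v - 3" "4 \<noteq> v - 3" "5 \<noteq> v - 3" "6 \<noteq> v - 3" "7 \<noteq> v - 3" "8 \<noteq> v - 3" "9 \<noteq> v - 3" "10 \<noteq> v - 3" "11 \<noteq> v - 3" "v - 1 \<noteq> 0" "v - 1 \<noteq> 1" "v - 1 \<noteq> 2" "v - 1 \<noteq> 3" "v - 1 \<noteq> 4" "v - 1 \<noteq> 5" "v - 1 \<noteq> 6" "v - 1 \<noteq> 7" "v - 1 \<noteq> 8" "v - 1 \<noteq> 9" "v - 1 \<noteq> 10" "v - 1 \<noteq> 11" "v - 2 \<noteq> 0" "v - 2 \<noteq> 1" "v - 2 \<noteq> 2" "v - 2 \<noteq> 3" "v - 2 \<noteq> 4" "v - 2 \<noteq> 5" "v - 2 \<noteq> 6" "v - 2 \<noteq> 7" "v - 2 \<noteq>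 8" "v - 2 \<noteq> 9" "v - 2 \<noteq> 10" "v - 2 \<noteq> 11" "v - 3 \<noteq> 0" "v - 3 \<noteq> 1" "v - 3 \<noteq> 2" "v - 3 \<noteq> 3" "v - 3 \<noteq> 4" "v - 3 \<noteq> 5" "v - 3 \<noteq> 6" "v - 3 \<noteq> 7" "v - 3 \<noteq> 8" "v - 3 \<noteq> 9" "v - 3 \<noteq> 10" "v - 3 \<noteq> 11" using v17 by auto
  show ?thesis using v13 v17
    by (simp add: Ey_def wM_def wS_def wT_def fS_def eps_def md_vminus md_vplus2 md_v0 md_num nat_vm pp_vm pp_num pp_0 pp_1 pp_Suc nf[simplified])
qed

lemma Ey_high9: "17 \<le> v \<Longrightarrow> Ey (v - 9) = 0"
proof -
  assume v17: "17 \<le> v"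
  have nf: "v - 1 \<noteq> v - 2" "v - 1 \<noteq> v - 3" "v - 2 \<noteq> v - 1" "v - 2 \<noteq> v - 3" "v - 3 \<noteq> v - 1" "v - 3 \<noteq> v - 2" "v - 4 \<noteq> v - 1" "v - 4 \<noteq> v - 2" "v - 4 \<noteq> v - 3" "v - 5 \<noteq> v - 1" "v - 5 \<noteq> v - 2" "v - 5 \<noteq> v - 3" "v - 6 \<noteq> v - 1" "v - 6 \<noteq> v - 2" "v - 6 \<noteq> v - 3" "v - 7 \<noteq> v - 1" "v - 7 \<noteq> v - 2" "v - 7 \<noteq> v - 3" "v - 8 \<noteq> v - 1" "v - 8 \<noteq> v - 2" "v - 8 \<noteq> v - 3" "v - 9 \<noteq> v - 1" "v - 9 \<noteq> v - 2" "v - 9 \<noteq> v - 3" "v - 10 \<noteq> v - 1" "v - 10 \<noteq> v - 2" "v - 10 \<noteq> v - 3" "v - 11 \<noteq> v - 1" "v - 11 \<noteq> v - 2" "v - 11 \<noteq> v - 3" "v - 12 \<noteq> v - 1" "v - 12 \<noteq> v - 2" "v - 12 \<noteq> v - 3" "v - 13 \<noteq> v - 1" "v - 13 \<noteq> v - 2" "v - 13 \<noteq> v - 3" "v - 14 \<noteq> v - 1" "v - 14 \<noteq> v - 2" "v - 14 \<noteq> v - 3" "v - 15 \<noteq> v - 1" "v - 15 \<noteq> v - 2" "v - 15 \<noteq> v - 3" "0 \<noteq> v - 1" "1 \<noteq> v - 1" "2 \<noteq> v - 1" "3 \<noteq> v - 1" "4 \<noteq> v - 1" "5 \<noteq> v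 - 1" "6 \<noteq> v - 1" "7 \<noteq> v - 1" "8 \<noteq> v - 1" "9 \<noteq> v - 1" "10 \<noteq> v - 1" "11 \<noteq> v - 1" "0 \<noteq> v - 2" "1 \<noteq> v - 2" "2 \<noteq> v - 2" "3 \<noteq> v - 2" "4 \<noteq> v - 2" "5 \<noteq> v - 2" "6 \<noteq> v - 2" "7 \<noteq> v - 2" "8 \<noteq> v - 2" "9 \<noteq> v - 2" "10 \<noteq> v - 2" "11 \<noteq> v - 2" "0 \<noteq> v - 3" "1 \<noteq> v - 3" "2 \<noteq> v - 3" "3 \<noteq> v - 3" "4 \<noteq> v - 3" "5 \<noteq> v - 3" "6 \<noteq> v - 3" "7 \<noteq> v - 3" "8 \<noteq> v - 3" "9 \<noteq> v - 3" "10 \<noteq> v - 3" "11 \<noteq> v - 3" "v - 1 \<noteq> 0" "v - 1 \<noteq> 1" "v - 1 \<noteq> 2" "v - 1 \<noteq> 3" "v - 1 \<noteq> 4" "v - 1 \<noteq> 5" "v - 1 \<noteq> 6" "v - 1 \<noteq> 7" "v - 1 \<noteq> 8" "v - 1 \<noteq> 9" "v - 1 \<noteq> 10" "v - 1 \<noteq> 11" "v - 2 \<noteq> 0" "v - 2 \<noteq> 1" "v - 2 \<noteq> 2" "v - 2 \<noteq> 3" "v - 2 \<noteq> 4" "v - 2 \<noteq> 5" "v - 2 \<noteq> 6" "v - 2 \<noteq> 7" "v - 2 \<noteq> 8" "v - 2 \<noteq> 9" "v - 2 \<noteq> 10" "v - 2 \<noteq> 11" "v - 3 \<noteq> 0"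 "v - 3 \<noteq> 1" "v - 3 \<noteq> 2" "v - 3 \<noteq> 3" "v - 3 \<noteq> 4" "v - 3 \<noteq> 5" "v - 3 \<noteq> 6" "v - 3 \<noteq> 7" "v - 3 \<noteq> 8" "v - 3 \<noteq> 9" "v - 3 \<noteq> 10" "v - 3 \<noteq> 11" using v17 by auto
  show ?thesis using v13 v17
    by (simp add: Ey_def wM_def wS_def wT_def fS_def eps_def md_vminus md_vplus2 md_v0 md_num nat_vm pp_vm pp_num pp_0 pp_1 pp_Suc nf[simplified])
qed

lemma Ey_13: "v = 13 \<Longrightarrow> y < v \<Longrightarrow> Ey y = 0"
proof -
  assume v: "v = 13" and "y < v"
  then have "y = 0 \<or> y = 1 \<or> y = 2 \<or> y = 3 \<or> y = 4 \<or> y = 5 \<or> y = 6 \<or> y = 7 \<or> y = 8 \<or> y = 9 \<or> y = 10 \<or> y = 11 \<or> y = 12" by presburger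
  then show ?thesis unfolding Ey_def wM_def wS_def wT_def fS_def eps_def md_def pp_def using v
    by (elim disjE) simp_all
qed

lemma Ey_all: "y < v \<Longrightarrow> Ey y = 0"
proof -
  assume y: "y < v"
  have "v = 13 \<or> 17 \<le> v" using v13 v4 by presburger
  then show ?thesis
  proof
    assume "v = 13" then show ?thesis using Ey_13 y by simp
  next
    assume v17: "17 \<le> v"
    show ?thesis
    proof (cases "y < 6")
      case True then show ?thesis using Ey_low v17 by simp
    next
      case False
      show ?thesis
      proof (cases "y + 10 \<le> v")
        case True then show ?thesis using Ey_mid False by simp
      next
        case F2: False
        define k where "k = v - y"
        have yk: "y = v - k" "1 \<le> k" "k \<le> 9" using y F2 unfolding k_def by auto
        then have "k = 1 \<or> k = 2 \<or> k = 3 \<or> k = 4 \<or> k = 5 \<or> k = 6 \<or> k = 7 \<or> k = 8 \<or> k = 9" by auto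
        then show ?thesis unfolding yk(1) using v17
          Ey_high1 Ey_high2 Ey_high3 Ey_high4 Ey_high5 Ey_high6 Ey_high7 Ey_high8 Ey_high9 by auto
      qed
    qed
  qed
qed



end

context cons begin
lemma sum7: "(\<Sum>e<7. (f :: nat \<Rightarrow> int) e) = f 0 + f 1 + f 2 + f 3 + f 4 + f 5 + (f 6 :: int)"
  by (simp add: eval_nat_numeral add.assoc)

lemma alt7: "even n \<Longrightarrow> 6 \<le> n \<Longrightarrow> (\<Sum>t\<in>{7..n}. (-1::int)^t) = 0"
proof -
  assume "even n" "6 \<le> n"
  then obtain m where m: "n = 6 + 2*m" by (metis add_diff_inverse_nat evenE even_add even_numeral le_add_diff_inverse not_less)
  have "(\<Sum>t\<in>{7..6 + 2*m}. (-1::int)^t) = 0"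
  proof (induction m)
    case 0 then show ?case by simp
  next
    case (Suc m)
    have e: "{7..6 + 2 * Suc m} = insert (8 + 2*m) (insert (7 + 2*m) {7..6 + 2*m})" by auto
    have "(\<Sum>t\<in>{7..6 + 2 * Suc m}. (-1::int)^t) = (-1)^(8+2*m) + (-1)^(7 + 2*m) + (\<Sum>t\<in>{7..6 + 2*m}. (-1::int)^t)"
      unfolding e by simp
    also have "\<dots> = 0" using Suc.IH by simp
    finally show ?case .
  qed
  then show ?thesis using m by simp
qed

lemma palt: "(\<Sum>j<2*m+1. (-1::int)^j) = 1"
proof (induction m)
  case 0 then show ?case by simp
next
  case (Suc m)
  have "(\<Sum>j<2*Suc m+1. (-1::int)^j) = (\<Sum>j<2*m+1. (-1::int)^j) + (-1)^(2*m+1) + (-1)^(2*m+2)"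
    by (simp add: numeral_eq_Suc)
  then show ?case using Suc.IH by simp
qed

lemma psum: "(\<Sum>j<v. pp j) = 1" unfolding pp_def by (subst hh2) (rule palt)

lemma split4: "(\<Sum>t\<in>{4..hh}. f t) = f 4 + f 5 + f 6 + (\<Sum>t\<in>{7..hh}. (f t :: int))"
proof -
  have e: "{4..hh} = insert 4 (insert 5 (insert 6 {7..hh}))" using hh6 by auto
  show ?thesis unfolding e by (simp add: add.assoc)
qed

lemma wM_big: "7 \<le> t \<Longrightarrow> wM j t = (-1)^t" unfolding wM_def by auto

lemma XA: "j < v \<Longrightarrow> (\<Sum>t\<in>{4..hh}. wM j t) + (\<Sum>e<7. wS j e) = 0"
proof -
  assume j: "j < v"
  have "(\<Sum>t\<in>{7..hh}. wM j t) = (\<Sum>t\<in>{7..hh}. (-1)^t)" by (rule sum.cong) (auto simp: wM_big)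
  also have "\<dots> = 0" using alt7 hh_even hh6 by simp
  finally have z: "(\<Sum>t\<in>{7..hh}. wM j t) = 0" .
  have nf: "v - 1 \<noteq> v - 2" "v - 1 \<noteq> v - 3" "v - 2 \<noteq> v - 3" "v - 2 \<noteq> v - 1" "v - 3 \<noteq> v - 1" "v - 3 \<noteq> v - 2"
    using v13 by auto
  have z2: "(\<Sum>t\<in>{7..hh}. (-1::int)^t) = 0" using alt7 hh_even hh6 by simp
  show ?thesis unfolding split4 z sum7 wM_def wS_def fS_def eps_def
    using nf z2 by (cases "j = v - 3"; cases "j = v - 2"; cases "j = v - 1") auto
qed

lemma SA: "e < 7 \<Longrightarrow> (\<Sum>j<v. wS j e) + (\<Sum>l\<in>{l\<in>{..<7}. 2*v + e \<in> blkF l}. wF l) = 0"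
proof -
  assume e: "e < 7"
  have w: "wS j e = eps e * pp j - (if fS j e then 2 * eps e * pp j else 0)" for j
    unfolding wS_def by simp
  have s1: "(\<Sum>j<v. wS j e) = eps e - (\<Sum>j<v. if fS j e then 2 * eps e * pp j else 0)"
    unfolding w sum_subtractf sum_distrib_left[symmetric] psum by simp
  have s2: "(\<Sum>l\<in>{l\<in>{..<7}. 2*v + e \<in> blkF l}. wF l) = (\<Sum>l<7. if 2*v + e \<in> blkF l then wF l else 0)"
    by (rule sum.inter_filter) simp
  have v3: "v - 3 < v" "v - 2 < v" "v - 1 < v" using v13 by auto
  have pv: "pp (v - 3) = 1" "pp (v - 2) = -1" "pp (v - 1) = 1" using pp_vm[of 3] pp_vm[of 2] pp_vm[of 1] v13 by auto
  have "e = 0 \<or> e = 1 \<or> e = 2 \<or> e = 3 \<or> e = 4 \<or> e = 5 \<or> e = 6" using e by presburger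
  then show ?thesis unfolding s1 s2 sum7 fS_def
    by (elim disjE) (simp_all add: sum.delta v3[simplified] pv[simplified] eps_def wF_def blkF_def)
qed


lemma YA: "y < v \<Longrightarrow> (\<Sum>t\<in>{4..hh}. wM (md (int y + int t)) t + wM (md (int y - int t)) t)
   + (\<Sum>e<7. wS (md (int y + 3 - int e)) e) + (wT y + wT (md (int y - 2)) + wT (md (int y - 6))) = 0"
proof -
  assume y: "y < v"
  have "(\<Sum>t\<in>{7..hh}. wM (md (int y + int t)) t + wM (md (int y - int t)) t) = (\<Sum>t\<in>{7..hh}. 2 * (-1)^t)"
    by (rule sum.cong) (auto simp: wM_big)
  also have "\<dots> = 2 * (\<Sum>t\<in>{7..hh}. (-1::int)^t)" by (simp add: sum_distrib_left)
  also have "\<dots> = 0" using alt7 hh_even hh6 by simp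
  finally have z: "(\<Sum>t\<in>{7..hh}. wM (md (int y + int t)) t + wM (md (int y - int t)) t) = 0" .
  have "Ey y = 0" using Ey_all y by simp
  then show ?thesis unfolding split4 z sum7 Ey_def by (simp add: algebra_simps)
qed

lemma abs_pp: "\<bar>pp j\<bar> = 1" unfolding pp_def by (simp add: power_abs)
lemma abs_wM: "\<bar>wM j t\<bar> = 1" unfolding wM_def by (simp add: abs_pp abs_mult power_abs)
lemma abs_wS: "\<bar>wS j e\<bar> = 1" unfolding wS_def eps_def by (simp add: abs_pp abs_mult)
lemma abs_wT: "\<bar>wT i\<bar> = 1" unfolding wT_def by (simp add: abs_pp)
lemma abs_wF: "\<bar>wF l\<bar> = 1" unfolding wF_def by simp

lemma flow_new:
  assumes old: "STS v {..<v} B0" and fl: "zero_sum_flow k {..<v} B0 f0"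
  shows "zero_sum_flow k {..<2*v+7} (B0 \<union> BN) (gg f0 B0)"
proof -
  have B0sub: "\<forall>b\<in>B0. b \<subseteq> {..<v}" using old unfolding STS_def is_STS_def by auto
  have finB0: "finite B0" by (rule finite_subset[of B0 "Pow {..<v}"]) (use B0sub in auto)
  have k2: "2 \<le> k" using fl unfolding zero_sum_flow_def by auto
  have fb: "\<forall>b\<in>B0. f0 b \<noteq> 0 \<and> \<bar>f0 b\<bar> \<le> int k - 1" using fl unfolding zero_sum_flow_def by auto
  have fs: "\<forall>x\<in>{..<v}. (\<Sum>b\<in>{b\<in>B0. x \<in> b}. f0 b) = 0" using fl unfolding zero_sum_flow_def by auto
  have vals: "\<bar>gg f0 B0 b\<bar> = 1" if b: "b \<in> BN" for b
  proof -
    from b consider "b \<in> BM" | "b \<in> BS" | "b \<in> BT" | "b \<in> BF" unfolding BN_def by auto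
    then show ?thesis
    proof cases
      case 1 then obtain q where q: "q \<in> PM" "b = (\<lambda>(j,t). blkM j t) q" unfolding BM_def by auto
      then show ?thesis using gM[OF B0sub q(1)] abs_wM by (auto split: prod.splits)
    next
      case 2 then obtain q where q: "q \<in> PS" "b = (\<lambda>(j,e). blkS j e) q" unfolding BS_def by auto
      then show ?thesis using gS[OF B0sub q(1)] abs_wS by (auto split: prod.splits)
    next
      case 3 then obtain i where q: "i \<in> {..<v}" "b = blkT i" unfolding BT_def by auto
      then show ?thesis using gT[OF B0sub q(1)] abs_wT by auto
    next
      case 4 then obtain l where q: "l \<in> {..<7}" "b = blkF l" unfolding BF_def by auto
      then show ?thesis using gF[OF B0sub q(1)] abs_wF by auto
    qed
  qed
  have bnd: "\<forall>b\<in>B0 \<union> BN. gg f0 B0 b \<noteq> 0 \<and> \<bar>gg f0 B0 b\<bar> \<le> int k - 1"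
  proof
    fix b assume b: "b \<in> B0 \<union> BN"
    show "gg f0 B0 b \<noteq> 0 \<and> \<bar>gg f0 B0 b\<bar> \<le> int k - 1"
    proof (cases "b \<in> B0")
      case True then show ?thesis using fb unfolding gg_def by auto
    next
      case False then have "b \<in> BN" using b by auto
      then show ?thesis using vals[of b] k2 by auto
    qed
  qed
  have sums: "(\<Sum>b\<in>{b\<in>B0 \<union> BN. x \<in> b}. gg f0 B0 b) = 0" if x: "x \<in> {..<2*v+7}" for x
  proof -
    note D = sum_decomp[OF B0sub finB0, of f0 x]
    consider (X) "x < v" | (Y) "v \<le> x" "x < 2*v" | (S) "2*v \<le> x" "x < 2*v+7"
      using x by (cases "x < v"; cases "x < 2*v") auto
    then show ?thesis
    proof cases
      case X
      have e1: "{i\<in>{..<v}. x \<in> blkT i} = {}" "{l\<in>{..<7}. x \<in> blkF l} = {}" using XT XF X by auto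
      show ?thesis unfolding D XM[OF X] XS[OF X] e1 using fs X XA[OF X] by simp
    next
      case Y
      define y where "y = x - v"
      have xy: "x = v + y" "y < v" using Y unfolding y_def by auto
      have e0: "{b\<in>B0. x \<in> b} = {}" using B0sub Y by (force simp: subset_iff)
      have e1: "{l\<in>{..<7}. x \<in> blkF l} = {}" using YF xy by auto
      show ?thesis unfolding D e0 e1 unfolding xy(1) YM[OF xy(2)] YS[OF xy(2)] YT[OF xy(2)]
        using YA[OF xy(2)] by (simp add: add.assoc)
    next
      case S
      define e where "e = x - 2*v"
      have xe: "x = 2*v + e" "e < 7" using S unfolding e_def by auto
      have e0: "{b\<in>B0. x \<in> b} = {}" using B0sub S by (force simp: subset_iff)
      show ?thesis unfolding D e0 unfolding xe(1) SM ST SS[OF xe(2)] using SA[OF xe(2)] by simp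
    qed
  qed
  show ?thesis unfolding zero_sum_flow_def using k2 bnd sums by blast
qed

lemma main_cons:
  assumes old: "STS v {..<v} B0" and fl: "zero_sum_flow k {..<v} B0 f0"
  shows "\<exists>(X' :: nat set) B' g. STS (2 * v + 7) X' B' \<and> zero_sum_flow k X' B' g"
  using sts_new[OF old] flow_new[OF old fl] by blast

end

theorem theorem2:
  fixes v k :: nat and X :: "'a set" and B :: "'a set set" and f :: "'a set \<Rightarrow> int"
  assumes "v > 9" and "v mod 4 = 1" and "k \<ge> 2"
    and "STS v X B" and "zero_sum_flow k X B f"
  shows "\<exists>(X' :: nat set) B' g. STS (2 * v + 7) X' B' \<and> zero_sum_flow k X' B' g"
proof -
  obtain B0 :: "nat set set" and f0 where o: "STS v {..<v} B0" "zero_sum_flow k {..<v} B0 f0"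
    using transport[OF assms(4) assms(5)] by blast
  have v13: "13 \<le> v" using assms(1,2) by presburger
  interpret cons v using v13 assms(2) by unfold_locales
  show ?thesis using main_cons[OF o] by blast
qed

end
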